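(* Let $A\in\mathrm{GL}_2(\mathbb{R})^k$ and let $A_\star\in\mathrm{SL}_2(\mathbb{R})^k$ be given by $(A_\star)_j=|\det A_j|^{-1/2}A_j$. If $A_\star$ satisfies a uniform LDT estimate in $\mathrm{SL}_2(\mathbb{R})^k$ (either of uniform exponential or of uniform sub-exponential type), then $A$ satisfies an LDT estimate of the same type, uniform in $\mathrm{GL}_2(\mathbb{R})^k$. Moreover, if the Lyapunov exponent $L:\mathrm{SL}_2(\mathbb{R})^k\to\mathbb{R}$ has a certain (at most Lipschitz) modulus of continuity near $A_\star$, then $L^+:\mathrm{GL}_2(\mathbb{R})^k\to\mathbb{R}$ has the same modulus of continuity near $A$.
   Context: $\Sigma=\{1,\dots,k\}$, $p$ a probability vector with positive entries, $X=\Sigma^{\mathbb{Z}}$, $\mathbb{P}=p^{\mathbb{Z}}$, $T$ the shift. A cocycle $B=(B_1,\dots,B_k)$ acts by $B(x)=B_{x_0}$ with iterates $B^{(n)}(x)=B_{x_{n-1}}\cdots B_{x_0}$; $d(A,B)=\max_j\|A_j-B_j\|$; $L^+(B)$ is the a.s. limit of $\frac1n\log\|B^{(n)}(x)\|$, and for $\mathrm{SL}_2$-valued cocycles $L(B):=L^+(B)$. Here $\mathrm{SL}_2(\mathbb{R})$ denotes matrices with determinant $\pm1$. A uniform exponential LDT estimate for $A$ (in a given space of cocycles) means: there are $\delta,c>0$ and for every small $\varepsilon>0$ some $\bar n$ with $\mathbb{P}[|\frac1n\log\|B^{(n)}\|-L^+(B)|>\varepsilon]<e^{-c\varepsilon^2n}$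 for all cocycles $B$ in that space with $d(B,A)<\delta$ and all $n\ge\bar n$. A uniform sub-exponential LDT estimate means: there are $\delta>0$, $\bar n$, $a,b>0$ with $\mathbb{P}[|\frac1n\log\|B^{(n)}\|-L^+(B)|>n^{-a}]<e^{-n^b}$ for all such $B$ with $d(B,A)<\delta$ and $n\ge\bar n$. A modulus of continuity near a point means a bound $|L(B_1)-L(B_2)|\le \omega(d(B_1,B_2))$ on a neighborhood, for a nondecreasing function $\omega$ with $\omega(t)\gtrsim t$ (at most Lipschitz). *)

theory Defs
  imports "HOL-Probability.Probability"
begin

text \<open>Alphabet Sigma is a finite type 'a (k = CARD('a)); the probability vector is a
  pmf p on 'a with full support (positive entries).\<close>

type_synonym mat2 = "real^2^2"

definition mnorm :: "mat2 \<Rightarrow> real" where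
  "mnorm M = onorm (\<lambda>v. M *v v)"

definition bernoulli :: "'a pmf \<Rightarrow> (int \<Rightarrow> 'a) measure" where
  "bernoulli p = PiM UNIV (\<lambda>_::int. measure_pmf p)"

fun coc_iter :: "('a \<Rightarrow> mat2) \<Rightarrow> nat \<Rightarrow> (int \<Rightarrow> 'a) \<Rightarrow> mat2" where
  "coc_iter B 0 x = mat 1"
| "coc_iter B (Suc n) x = B (x (int n)) ** coc_iter B n x"

definition coc_dist :: "('a::finite \<Rightarrow> mat2) \<Rightarrow> ('a \<Rightarrow> mat2) \<Rightarrow> real" where
  "coc_dist A B = Max (range (\<lambda>j. mnorm (A j - B j)))"

definition Lplus :: "'a pmf \<Rightarrow> ('a \<Rightarrow> mat2) \<Rightarrow> real" where
  "Lplus p B = (THE L. AE x in bernoulli p.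
       (\<lambda>n. ln (mnorm (coc_iter B n x)) / real n) \<longlonglongrightarrow> L)"

definition GL2 :: "('a \<Rightarrow> mat2) set" where
  "GL2 = {B. \<forall>j. det (B j) \<noteq> 0}"

text \<open>SL_2 in the paper's sense: determinant +-1.\<close>
definition SL2 :: "('a \<Rightarrow> mat2) set" where
  "SL2 = {B. \<forall>j. \<bar>det (B j)\<bar> = 1}"

definition normalize_coc :: "('a \<Rightarrow> mat2) \<Rightarrow> ('a \<Rightarrow> mat2)" where
  "normalize_coc A = (\<lambda>j. (1 / sqrt \<bar>det (A j)\<bar>) *\<^sub>R A j)"

definition uniform_exp_LDT :: "'a::finite pmf \<Rightarrow> ('a \<Rightarrow> mat2) set \<Rightarrow> ('a \<Rightarrow> mat2) \<Rightarrow> bool" where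
  "uniform_exp_LDT p S A \<longleftrightarrow>
    (\<exists>\<delta>>0. \<exists>c>0. \<exists>\<epsilon>0>0. \<forall>\<epsilon>. 0 < \<epsilon> \<and> \<epsilon> < \<epsilon>0 \<longrightarrow>
      (\<exists>nbar. \<forall>B\<in>S. coc_dist B A < \<delta> \<longrightarrow> (\<forall>n\<ge>nbar.
         measure (bernoulli p) {x \<in> space (bernoulli p).
             \<bar>ln (mnorm (coc_iter B n x)) / real n - Lplus p B\<bar> > \<epsilon>}
           < exp (- c * \<epsilon>\<^sup>2 * real n))))"

definition uniform_subexp_LDT :: "'a::finite pmf \<Rightarrow> ('a \<Rightarrow> mat2) set \<Rightarrow> ('a \<Rightarrow> mat2) \<Rightarrow> bool" where
  "uniform_subexp_LDT p S A \<longleftrightarrow>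
    (\<exists>\<delta>>0. \<exists>nbar. \<exists>a>0. \<exists>b>0. \<forall>B\<in>S. coc_dist B A < \<delta> \<longrightarrow> (\<forall>n\<ge>nbar.
         measure (bernoulli p) {x \<in> space (bernoulli p).
             \<bar>ln (mnorm (coc_iter B n x)) / real n - Lplus p B\<bar> > real n powr (- a)}
           < exp (- (real n powr b))))"

text \<open>Admissible moduli: nondecreasing, at most Lipschitz (omega(t) >~ t near 0).\<close>
definition admissible_modulus :: "(real \<Rightarrow> real) \<Rightarrow> bool" where
  "admissible_modulus \<omega> \<longleftrightarrow> mono_on {0..} \<omega> \<and>
     (\<exists>c>0. \<exists>t0>0. \<forall>t. 0 \<le> t \<and> t \<le> t0 \<longrightarrow> c * t \<le> \<omega> t)"

definition has_modulus_near ::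
  "(('a::finite \<Rightarrow> mat2) \<Rightarrow> real) \<Rightarrow> ('a \<Rightarrow> mat2) set \<Rightarrow> (real \<Rightarrow> real) \<Rightarrow> ('a \<Rightarrow> mat2) \<Rightarrow> bool" where
  "has_modulus_near F S \<omega> A \<longleftrightarrow>
    (\<exists>\<delta>>0. \<exists>C>0. \<forall>B1\<in>S. \<forall>B2\<in>S. coc_dist B1 A < \<delta> \<longrightarrow> coc_dist B2 A < \<delta> \<longrightarrow>
       \<bar>F B1 - F B2\<bar> \<le> C * \<omega> (C * coc_dist B1 B2))"

end

theory Submission
  imports Defs
begin

definition shift :: "nat \<Rightarrow> (int \<Rightarrow> 'a) \<Rightarrow> (int \<Rightarrow> 'a)" where
  "shift k x = (\<lambda>i. x (i + int k))"

lemma shift_0[simp]: "shift 0 x = x" by (simp add: shift_def)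
lemma shift_shift[simp]: "shift n (shift m x) = shift (m + n) x"
  by (simp add: shift_def algebra_simps)
lemma shift_apply[simp]: "shift k x i = x (i + int k)" by (simp add: shift_def)

locale bern =
  fixes p :: "'a::finite pmf"
begin

sublocale P: product_prob_space "\<lambda>_::int. measure_pmf p" UNIV
  by unfold_locales

abbreviation "\<Omega> \<equiv> bernoulli p"

lemma Omega_def: "\<Omega> = PiM UNIV (\<lambda>_::int. measure_pmf p)"
  by (simp add: bernoulli_def)

lemma prob_space_Omega: "prob_space \<Omega>"
  unfolding Omega_def by (rule P.prob_space_axioms)

lemma space_Omega[simp]: "space \<Omega> = UNIV"
  unfolding Omega_def by (simp add: space_PiM)

lemma meas_restrict_N:
  assumes "finite J" and sp: "\<And>w. G w \<in> space N"
  shows "G \<in> measurable (PiM J (\<lambda>_. measure_pmf p)) N"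
proof -
  have "sets (PiM J (\<lambda>_. measure_pmf p)) = sets (PiM J (\<lambda>_. count_space (UNIV::'a set)))"
    by (intro sets_PiM_cong) auto
  also have "PiM J (\<lambda>_. count_space (UNIV::'a set)) = count_space (PiE J (\<lambda>_. UNIV))"
    using assms by (intro count_space_PiM_finite) auto
  finally have "sets (PiM J (\<lambda>_. measure_pmf p)) = sets (count_space (PiE J (\<lambda>_. UNIV::'a set)))" .
  hence eq: "measurable (PiM J (\<lambda>_. measure_pmf p)) N = measurable (count_space (PiE J (\<lambda>_. UNIV::'a set))) N"
    by (intro measurable_cong_sets) auto
  show ?thesis unfolding eq using sp by simp
qed

lemma meas_dep:
  fixes g :: "(int \<Rightarrow> 'a) \<Rightarrow> 'b"
  assumes "finite J" and dep: "\<And>x y. (\<And>i. i \<in> J \<Longrightarrow> x i = y i) \<Longrightarrow> g x = g y"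
    and sp: "\<And>x. g x \<in> space N"
  shows "g \<in> measurable \<Omega> N"
proof -
  define G where "G = (\<lambda>w. g (\<lambda>i. if i \<in> J then w i else undefined))"
  have eq: "g = (\<lambda>x. G (restrict x J))"
    by (rule ext) (auto simp: G_def intro!: dep)
  have "(\<lambda>x. restrict x J) \<in> measurable \<Omega> (PiM J (\<lambda>_. measure_pmf p))"
    unfolding Omega_def by (rule measurable_restrict_subset) auto
  moreover have "G \<in> measurable (PiM J (\<lambda>_. measure_pmf p)) N"
    by (rule meas_restrict_N[OF assms(1)]) (simp add: G_def sp)
  ultimately show ?thesis unfolding eq by (rule measurable_compose)
qed

lemma meas_dep_count:
  fixes g :: "(int \<Rightarrow> 'a) \<Rightarrow> 'b"
  assumes "finite J" and dep: "\<And>x y. (\<And>i. i \<in> J \<Longrightarrow> x i = y i) \<Longrightarrow> g x = g y"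
  shows "g \<in> measurable \<Omega> (count_space UNIV)"
  using meas_dep[OF assms, where N="count_space UNIV"] by simp

lemma sets_dep:
  assumes "finite J" and dep: "\<And>x y. (\<And>i. i \<in> J \<Longrightarrow> x i = y i) \<Longrightarrow> P x = P y"
  shows "{x. P x} \<in> sets \<Omega>"
proof -
  have "P \<in> measurable \<Omega> (count_space UNIV)" by (rule meas_dep_count[OF assms])
  hence "P -` {True} \<inter> space \<Omega> \<in> sets \<Omega>" by (rule measurable_sets) auto
  moreover have "P -` {True} \<inter> space \<Omega> = {x. P x}" by auto
  ultimately show ?thesis by simp
qed

lemma shift_meas: "shift k \<in> measurable \<Omega> \<Omega>"
  unfolding Omega_def shift_def
  by (rule measurable_PiM_single') auto

lemma distr_shift: "distr \<Omega> \<Omega> (shift k) = \<Omega>"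
proof -
  have "distr (PiM UNIV (\<lambda>_::int. measure_pmf p)) (PiM UNIV (\<lambda>i. (\<lambda>_::int. measure_pmf p) ((\<lambda>i. i + int k) i)))
          (\<lambda>\<omega>. \<lambda>n\<in>UNIV. \<omega> ((\<lambda>i. i + int k) n)) = PiM UNIV (\<lambda>i. (\<lambda>_::int. measure_pmf p) ((\<lambda>i. i + int k) i))"
    by (rule distr_PiM_reindex) (auto simp: inj_on_def prob_space_measure_pmf)
  thus ?thesis unfolding Omega_def shift_def restrict_def by simp
qed

end

context bern
begin

sublocale O: prob_space \<Omega> by (rule prob_space_Omega)

lemma indep_coords: "O.indep_vars (\<lambda>_. measure_pmf p) (\<lambda>i x. x i) UNIV"
proof -
  have rv: "\<And>i. O.random_variable (measure_pmf p) (\<lambda>x. x i)"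
    unfolding Omega_def by (rule measurable_component_singleton) simp
  have "distr \<Omega> (PiM UNIV (\<lambda>_. measure_pmf p)) (\<lambda>x. \<lambda>i\<in>UNIV. x i) = PiM UNIV (\<lambda>i. distr \<Omega> (measure_pmf p) (\<lambda>x. x i))"
    unfolding Omega_def restrict_def using P.PiM_component[of _] by simp
  thus ?thesis
    by (subst O.indep_vars_iff_distr_eq_PiM[OF _ rv]) (simp_all add: Omega_def)
qed

lemma indep_blocks:
  fixes g :: "'i \<Rightarrow> (int \<Rightarrow> 'a) \<Rightarrow> 'b" and K :: "'i \<Rightarrow> int set"
  assumes fin: "\<And>j. j \<in> L \<Longrightarrow> finite (K j)"
    and disj: "disjoint_family_on K L"
    and dep: "\<And>j x y. j \<in> L \<Longrightarrow> (\<And>i. i \<in> K j \<Longrightarrow> x i = y i) \<Longrightarrow> g j x = g j y"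
    and sp: "\<And>j x. j \<in> L \<Longrightarrow> g j x \<in> space (N j)"
  shows "O.indep_vars N g L"
proof -
  have ind: "O.indep_vars (\<lambda>j. PiM (K j) (\<lambda>_. measure_pmf p)) (\<lambda>j \<omega>. restrict (\<lambda>i. \<omega> i) (K j)) L"
    by (rule O.indep_vars_restrict[OF indep_coords _ disj]) auto
  define G where "G = (\<lambda>j w. g j (\<lambda>i. if i \<in> K j then w i else undefined))"
  have "O.indep_vars N (\<lambda>j x. G j (restrict (\<lambda>i. x i) (K j))) L"
    by (rule O.indep_vars_compose2[OF ind]) (auto simp: G_def intro!: meas_restrict_N fin sp)
  moreover have "\<And>j. j \<in> L \<Longrightarrow> (\<lambda>x. G j (restrict (\<lambda>i. x i) (K j))) = g j"
    by (auto simp: G_def intro!: ext dep)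
  ultimately show ?thesis
    by (subst O.indep_vars_cong[where Y="\<lambda>j x. G j (restrict (\<lambda>i. x i) (K j))", OF refl]) auto
qed

lemma distr_shift_borel:
  assumes "h \<in> borel_measurable \<Omega>"
  shows "distr \<Omega> borel (\<lambda>x. h (shift k x)) = distr \<Omega> borel h"
proof -
  have "distr \<Omega> borel (\<lambda>x. h (shift k x)) = distr (distr \<Omega> \<Omega> (shift k)) borel h"
    using distr_distr[OF assms shift_meas] by (simp add: comp_def)
  thus ?thesis by (simp add: distr_shift)
qed

lemma integral_shift:
  fixes h :: "(int \<Rightarrow> 'a) \<Rightarrow> real"
  assumes "h \<in> borel_measurable \<Omega>"
  shows "O.expectation (\<lambda>x. h (shift k x)) = O.expectation h"
proof -
  have "O.expectation (\<lambda>x. h (shift k x)) = integral\<^sup>L (distr \<Omega> \<Omega> (shift k)) h"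
    using integral_distr[of "shift k" \<Omega> \<Omega> h] shift_meas assms by simp
  thus ?thesis by (simp add: distr_shift)
qed

lemma prob_shift:
  assumes "S \<in> sets \<Omega>"
  shows "O.prob {x. shift k x \<in> S} = O.prob S"
proof -
  have "O.prob S = measure (distr \<Omega> \<Omega> (shift k)) S" by (simp add: distr_shift)
  also have "\<dots> = measure \<Omega> (shift k -` S \<inter> space \<Omega>)"
    by (rule measure_distr[OF shift_meas assms])
  finally show ?thesis by (simp add: vimage_def)
qed

end

context bern
begin

lemma dep_meas_block:
  fixes h :: "(int \<Rightarrow> 'a) \<Rightarrow> real"
  assumes dep: "\<And>x y. (\<And>i. 0 \<le> i \<Longrightarrow> i < int m \<Longrightarrow> x i = y i) \<Longrightarrow> h x = h y"
  shows "h \<in> borel_measurable \<Omega>"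
  by (rule meas_dep[of "{0..<int m}"]) (auto intro: dep)

lemma hoeffding_block:
  fixes h :: "(int \<Rightarrow> 'a) \<Rightarrow> real"
  assumes m: "0 < m" and dep: "\<And>x y. (\<And>i. 0 \<le> i \<Longrightarrow> i < int m \<Longrightarrow> x i = y i) \<Longrightarrow> h x = h y"
    and bnd: "\<And>x. \<bar>h x\<bar> \<le> H" and eps: "\<epsilon> \<ge> 0" and K: "K > 0"
  shows "O.prob {x\<in>space \<Omega>. \<bar>(\<Sum>k\<in>{..<K}. h (shift (k*m + r) x)) / real (card {..<K}) - O.expectation h\<bar> \<ge> \<epsilon>}
           \<le> 2 * exp (-2 * real (card {..<K}) * \<epsilon>\<^sup>2 / ((H+1) - (-H-1))\<^sup>2)"
proof -
  have hm: "h \<in> borel_measurable \<Omega>" by (rule dep_meas_block[OF dep])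
  have dep': "h (shift (k*m + r) x) = h (shift (k*m + r) y)"
    if "\<And>i. i \<in> {int (k*m+r)..<int (k*m+r) + int m} \<Longrightarrow> x i = y i" for k x y
    by (rule dep) (use that in auto)
  interpret H: Hoeffding_ineq_iid \<Omega> "{..<K}" "\<lambda>k x. h (shift (k*m + r) x)" h "-H-1" "H+1" "O.expectation h"
  proof unfold_locales
    show "O.indep_vars (\<lambda>_. borel) (\<lambda>k x. h (shift (k * m + r) x)) {..<K}"
    proof (rule indep_blocks[where K="\<lambda>k. {int (k*m+r)..<int (k*m+r) + int m}"])
      show "disjoint_family_on (\<lambda>k. {int (k*m+r)..<int (k*m+r) + int m}) {..<K}"
      proof (unfold disjoint_family_on_def, intro ballI impI)
        fix a b assume ab: "a \<in> {..<K}" "b \<in> {..<K}" "a \<noteq> b"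
        show "{int (a*m+r)..<int (a*m+r) + int m} \<inter> {int (b*m+r)..<int (b*m+r) + int m} = {}"
        proof (cases "a < b")
          case True
          hence "a*m + m \<le> b*m" using m by (metis Suc_leI mult_Suc mult_le_mono1 add.commute)
          hence "int a * int m + int m \<le> int b * int m" by (metis of_nat_add of_nat_le_iff of_nat_mult)
          thus ?thesis by auto
        next
          case False
          hence "b*m + m \<le> a*m" using m ab(3) by (metis Suc_leI mult_Suc mult_le_mono1 add.commute linorder_neqE_nat)
          hence "int b * int m + int m \<le> int a * int m" by (metis of_nat_add of_nat_le_iff of_nat_mult)
          thus ?thesis by auto
        qed
      qed
    qed (auto intro: dep')
    show "\<And>i. i \<in> {..<K} \<Longrightarrow> distr \<Omega> borel (\<lambda>x. h (shift (i * m + r) x)) = distr \<Omega> borel h"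
      by (rule distr_shift_borel[OF hm])
    show "O.random_variable borel h" by (rule hm)
    show "AE x in \<Omega>. h x \<in> {- H - 1..H + 1}"
    proof (intro AE_I2)
      fix x show "h x \<in> {- H - 1..H + 1}" using bnd[of x] by (auto simp: abs_le_iff)
    qed
  qed simp_all
  have "-H-1 < H+1" using bnd[of undefined] by auto
  moreover have "{..<K} \<noteq> {}" using K by auto
  ultimately show ?thesis using H.Hoeffding_ineq_abs_ge'[OF eps] by simp
qed

end

lemma neg_mult_div: "-2 * (n::real) * e / D = n * (- (2 * e / D))"
  by (simp add: algebra_simps)

lemma sum_group_nat:
  fixes f :: "nat \<Rightarrow> 'b::comm_monoid_add"
  shows "(\<Sum>j<K*m. f j) = (\<Sum>k<K. \<Sum>r<m. f (k*m + r))"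
proof (induction K)
  case 0 then show ?case by simp
next
  case (Suc K)
  have "(\<Sum>j<Suc K*m. f j) = (\<Sum>j\<in>{0..<K*m}. f j) + (\<Sum>j\<in>{K*m..<K*m+m}. f j)"
    by (simp add: sum.atLeastLessThan_concat atLeast0LessThan[symmetric] add.commute)
  also have "(\<Sum>j\<in>{K*m..<K*m+m}. f j) = (\<Sum>r<m. f (K*m + r))"
    using sum.shift_bounds_nat_ivl[of f 0 "K*m" m]
    by (simp add: atLeast0LessThan add.commute)
  finally show ?case using Suc by (simp add: atLeast0LessThan)
qed

lemma tendsto_from_rational:
  fixes a :: "nat \<Rightarrow> real"
  assumes "\<forall>q::nat. eventually (\<lambda>K. \<bar>a K - \<mu>\<bar> < 1 / real (Suc q)) sequentially"
  shows "a \<longlonglongrightarrow> \<mu>"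
proof (rule tendstoI)
  fix e :: real assume e: "e > 0"
  obtain q where q: "inverse (real (Suc q)) < e" using reals_Archimedean[OF e] by auto
  show "eventually (\<lambda>K. dist (a K) \<mu> < e) sequentially"
    using assms[rule_format, of q]
  proof (rule eventually_mono)
    fix K assume "\<bar>a K - \<mu>\<bar> < 1 / real (Suc q)"
    thus "dist (a K) \<mu> < e" using q by (simp add: dist_real_def inverse_eq_divide)
  qed
qed

lemma tendsto_block_avg:
  fixes a :: "nat \<Rightarrow> real"
  assumes m: "0 < m" and bnd: "\<And>j. \<bar>a j\<bar> \<le> H"
    and lim: "(\<lambda>K. (\<Sum>j<K*m. a j) / real (K*m)) \<longlonglongrightarrow> \<mu>"
  shows "(\<lambda>N. (\<Sum>j<N. a j) / real N) \<longlonglongrightarrow> \<mu>"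
proof (rule tendstoI)
  fix e :: real assume e: "e > 0"
  define b where "b K = (\<Sum>j<K*m. a j) / real (K*m)" for K
  have "eventually (\<lambda>K. dist (b K) \<mu> < e/2) sequentially"
    using tendstoD[OF lim, of "e/2"] e unfolding b_def by simp
  then obtain K0 where K0: "\<And>K. K \<ge> K0 \<Longrightarrow> \<bar>b K - \<mu>\<bar> < e/2"
    by (auto simp: eventually_sequentially dist_real_def)
  have H0: "H \<ge> 0" using bnd[of 0] by auto
  define C where "C = real m * H + real m * \<bar>\<mu>\<bar>"
  have C0: "C \<ge> 0" using H0 by (simp add: C_def)
  obtain N1 :: nat where N1: "N1 > 2 * C / e" using reals_Archimedean2 by blast
  show "eventually (\<lambda>N. dist ((\<Sum>j<N. a j) / real N) \<mu> < e) sequentially"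
    unfolding eventually_sequentially
  proof (intro exI[of _ "max (Suc K0 * m) (Suc N1)"] allI impI)
    fix N assume N: "max (Suc K0 * m) (Suc N1) \<le> N"
    define K where "K = N div m"
    have KmN: "K * m \<le> N" using div_mult_mod_eq[of N m] unfolding K_def by linarith
    have NKm: "N < K*m + m"
    proof -
      have "N = K*m + N mod m" unfolding K_def by simp
      moreover have "N mod m < m" using m by simp
      ultimately show ?thesis by linarith
    qed
    have KK1: "Suc K0 \<le> K"
    proof -
      have "Suc K0 * m \<le> N" using N by simp
      thus ?thesis unfolding K_def using m by (simp add: less_eq_div_iff_mult_less_eq)
    qed
    hence KK0: "K \<ge> K0" by simp
    have Kpos: "K * m > 0" using KK1 m by simp
    have "N > 0" using KmN Kpos by linarith
    hence Npos: "real N > 0" by simp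
    have split: "(\<Sum>j<N. a j) = (\<Sum>j<K*m. a j) + (\<Sum>j\<in>{K*m..<N}. a j)"
      using KmN by (simp add: sum.atLeastLessThan_concat atLeast0LessThan[symmetric])
    have tail: "\<bar>\<Sum>j\<in>{K*m..<N}. a j\<bar> \<le> real m * H"
    proof -
      have "\<bar>\<Sum>j\<in>{K*m..<N}. a j\<bar> \<le> (\<Sum>j\<in>{K*m..<N}. \<bar>a j\<bar>)" by (rule sum_abs)
      also have "\<dots> \<le> real (card {K*m..<N}) * H" by (rule sum_bounded_above) (use bnd in auto)
      also have "\<dots> \<le> real m * H"
      proof (rule mult_right_mono[OF _ H0])
        show "real (card {K*m..<N}) \<le> real m" using NKm by simp
      qed
      finally show ?thesis .
    qed
    have bK: "\<bar>b K - \<mu>\<bar> < e/2" using K0 KK0 by simp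
    have eq1: "(\<Sum>j<K*m. a j) = real (K*m) * b K" using Kpos by (simp add: b_def)
    have "(\<Sum>j<N. a j) - real N * \<mu> = real (K*m) * (b K - \<mu>) + (\<Sum>j\<in>{K*m..<N}. a j) - (real N - real (K*m)) * \<mu>"
      using split eq1 by (simp add: algebra_simps)
    hence I0: "\<bar>(\<Sum>j<N. a j) - real N * \<mu>\<bar> \<le> real (K*m) * \<bar>b K - \<mu>\<bar> + real m * H + real m * \<bar>\<mu>\<bar>"
    proof -
      have A: "\<bar>real (K*m) * (b K - \<mu>)\<bar> = real (K*m) * \<bar>b K - \<mu>\<bar>" by (simp add: abs_mult)
      have B: "\<bar>(real N - real (K*m)) * \<mu>\<bar> \<le> real m * \<bar>\<mu>\<bar>"
      proof -
        have "\<bar>real N - real (K*m)\<bar> \<le> real m" using KmN NKm by linarith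
        thus ?thesis by (simp add: abs_mult mult_right_mono)
      qed
      assume "(\<Sum>j<N. a j) - real N * \<mu> = real (K*m) * (b K - \<mu>) + (\<Sum>j\<in>{K*m..<N}. a j) - (real N - real (K*m)) * \<mu>"
      thus ?thesis using A B tail by linarith
    qed
    have I1: "real (K*m) * \<bar>b K - \<mu>\<bar> \<le> real N * \<bar>b K - \<mu>\<bar>"
    proof (intro mult_right_mono)
      show "real (K*m) \<le> real N" using KmN by (simp only: of_nat_le_iff)
    qed simp
    have I: "\<bar>(\<Sum>j<N. a j) - real N * \<mu>\<bar> \<le> real N * \<bar>b K - \<mu>\<bar> + C"
      using I0 I1 unfolding C_def by linarith
    have "Suc N1 \<le> N" using N by simp
    hence "real N \<ge> real N1" by simp
    hence "real N > 2 * C / e" using N1 by linarith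
    hence "2 * C < real N * e" using e by (simp add: pos_divide_less_eq mult.commute)
    moreover have "real N * \<bar>b K - \<mu>\<bar> \<le> real N * (e/2)" using bK Npos by (intro mult_left_mono) auto
    moreover have "real N * (e/2) = real N * e / 2" by simp
    ultimately have lt: "\<bar>(\<Sum>j<N. a j) - real N * \<mu>\<bar> < real N * e" using I by linarith
    have "(\<Sum>j<N. a j) / real N - \<mu> = ((\<Sum>j<N. a j) - real N * \<mu>) / real N"
      using Npos by (simp add: diff_divide_distrib)
    hence "\<bar>(\<Sum>j<N. a j) / real N - \<mu>\<bar> = \<bar>(\<Sum>j<N. a j) - real N * \<mu>\<bar> / real N"
      using Npos by (simp add: abs_divide)
    also have "\<dots> < e" using lt Npos by (simp add: pos_divide_less_eq mult.commute)
    finally have "\<bar>(\<Sum>j<N. a j) / real N - \<mu>\<bar> < e" .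
    thus "dist ((\<Sum>j<N. a j) / real N) \<mu> < e" by (simp add: dist_real_def)
  qed
qed

context bern
begin

lemma slln_residue:
  fixes h :: "(int \<Rightarrow> 'a) \<Rightarrow> real"
  assumes m: "0 < m" and dep: "\<And>x y. (\<And>i. 0 \<le> i \<Longrightarrow> i < int m \<Longrightarrow> x i = y i) \<Longrightarrow> h x = h y"
    and bnd: "\<And>x. \<bar>h x\<bar> \<le> H"
  shows "AE x in \<Omega>. (\<lambda>K. (\<Sum>k<K. h (shift (k*m + r) x)) / real K) \<longlonglongrightarrow> O.expectation h"
proof -
  define \<mu> where "\<mu> = O.expectation h"
  have hm[measurable]: "h \<in> borel_measurable \<Omega>" by (rule dep_meas_block[OF dep])
  note shm[measurable] = shift_meas
  define avg where "avg K x = (\<Sum>k<K. h (shift (k*m + r) x)) / real K" for K x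
  define c where "c q = 2 * (1 / real (Suc q))\<^sup>2 / ((H+1) - (-H-1))\<^sup>2" for q
  have avgm[measurable]: "avg K \<in> borel_measurable \<Omega>" for K
    unfolding avg_def by measurable
  have c0: "c q > 0" for q
  proof -
    have "H \<ge> 0" using bnd[of undefined] by auto
    thus ?thesis by (simp add: c_def)
  qed
  have ev: "AE x in \<Omega>. eventually (\<lambda>K. \<bar>avg (Suc K) x - \<mu>\<bar> < 1 / real (Suc q)) sequentially" for q
  proof -
    define A where "A K = {x\<in>space \<Omega>. 1 / real (Suc q) \<le> \<bar>avg (Suc K) x - \<mu>\<bar>}" for K
    have Am: "A K \<in> sets \<Omega>" for K unfolding A_def by measurable
    have Ab: "O.prob (A K) \<le> 2 * exp (- c q) ^ Suc K" for K
    proof -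
      have "O.prob (A K) \<le> 2 * exp (-2 * real (card {..<Suc K}) * (1 / real (Suc q))\<^sup>2 / ((H+1) - (-H-1))\<^sup>2)"
        using hoeffding_block[where h=h and m=m and H=H and \<epsilon>="1 / real (Suc q)" and K="Suc K" and r=r, OF m dep bnd]
        unfolding A_def avg_def \<mu>_def by simp
      also have "exp (-2 * real (card {..<Suc K}) * (1 / real (Suc q))\<^sup>2 / ((H+1) - (-H-1))\<^sup>2) = exp (real (Suc K) * (- c q))"
        unfolding c_def card_lessThan by (simp only: neg_mult_div)
      also have "\<dots> = exp (- c q) ^ Suc K" by (rule exp_of_nat_mult)
      finally show ?thesis .
    qed
    have "summable (\<lambda>K. 2 * exp (- c q) ^ Suc K)"
      using c0[of q] by (intro summable_mult summable_Suc_iff[THEN iffD2] summable_geometric) auto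
    hence sm: "summable (\<lambda>K. measure \<Omega> (A K))"
      by (rule summable_comparison_test') (use Ab in auto)
    have "AE x in \<Omega>. eventually (\<lambda>K. x \<in> space \<Omega> - A K) sequentially"
      by (rule borel_cantelli_AE1[OF Am _ sm]) (simp add: O.emeasure_eq_measure)
    thus ?thesis by (auto simp: A_def elim!: eventually_mono eventually_mono)
  qed
  hence "AE x in \<Omega>. \<forall>q. eventually (\<lambda>K. \<bar>avg (Suc K) x - \<mu>\<bar> < 1 / real (Suc q)) sequentially"
    by (simp add: AE_all_countable)
  hence "AE x in \<Omega>. (\<lambda>K. avg (Suc K) x) \<longlonglongrightarrow> \<mu>"
    by (auto elim!: eventually_mono intro: tendsto_from_rational)
  thus ?thesis unfolding \<mu>_def
    by (rule eventually_mono) (auto simp: avg_def intro: LIMSEQ_imp_Suc)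
qed

lemma slln_block:
  fixes h :: "(int \<Rightarrow> 'a) \<Rightarrow> real"
  assumes m: "0 < m" and dep: "\<And>x y. (\<And>i. 0 \<le> i \<Longrightarrow> i < int m \<Longrightarrow> x i = y i) \<Longrightarrow> h x = h y"
    and bnd: "\<And>x. \<bar>h x\<bar> \<le> H"
  shows "AE x in \<Omega>. (\<lambda>N. (\<Sum>j<N. h (shift j x)) / real N) \<longlonglongrightarrow> O.expectation h"
proof -
  define \<mu> where "\<mu> = O.expectation h"
  have "AE x in \<Omega>. \<forall>r\<in>{..<m}. (\<lambda>K. (\<Sum>k<K. h (shift (k*m + r) x)) / real K) \<longlonglongrightarrow> \<mu>"
    unfolding \<mu>_def by (subst AE_finite_all) (auto intro: slln_residue[OF m dep bnd])
  thus ?thesis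
  proof (rule eventually_mono)
    fix x assume lim: "\<forall>r\<in>{..<m}. (\<lambda>K. (\<Sum>k<K. h (shift (k*m + r) x)) / real K) \<longlonglongrightarrow> \<mu>"
    have "(\<lambda>K. (\<Sum>r<m. (\<Sum>k<K. h (shift (k*m + r) x)) / real K) / real m) \<longlonglongrightarrow> (\<Sum>r<m. \<mu>) / real m"
      by (intro tendsto_divide tendsto_sum) (use lim m in auto)
    moreover have "(\<Sum>r<m. (\<Sum>k<K. h (shift (k*m + r) x)) / real K) / real m = (\<Sum>j<K*m. h (shift j x)) / real (K*m)" for K
    proof -
      have "(\<Sum>r<m. (\<Sum>k<K. h (shift (k*m + r) x)) / real K) / real m
          = ((\<Sum>r<m. \<Sum>k<K. h (shift (k*m + r) x)) / real K) / real m"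
        by (simp only: sum_divide_distrib)
      also have "(\<Sum>r<m. \<Sum>k<K. h (shift (k*m + r) x)) = (\<Sum>k<K. \<Sum>r<m. h (shift (k*m + r) x))"
        by (rule sum.swap)
      also have "\<dots> = (\<Sum>j<K*m. h (shift j x))"
        by (rule sum_group_nat[symmetric])
      finally show ?thesis by (simp only: divide_divide_eq_left of_nat_mult)
    qed
    moreover have "(\<Sum>r<m. \<mu>) / real m = \<mu>" using m by simp
    ultimately have "(\<lambda>K. (\<Sum>j<K*m. h (shift j x)) / real (K*m)) \<longlonglongrightarrow> \<mu>" by simp
    thus "(\<lambda>N. (\<Sum>j<N. h (shift j x)) / real N) \<longlonglongrightarrow> O.expectation h"
      unfolding \<mu>_def by (rule tendsto_block_avg[OF m bnd])
  qed
qed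

end

context bern
begin

definition Acoord :: "nat \<Rightarrow> (int \<Rightarrow> 'a) set set" where
  "Acoord i = sigma_sets (space \<Omega>) {(\<lambda>x. x (int i)) -` S \<inter> space \<Omega> | S. S \<in> sets (measure_pmf p)}"

lemma indep_Acoord: "O.indep_sets Acoord UNIV"
proof -
  have "O.indep_vars (\<lambda>_. measure_pmf p) (\<lambda>i x. x (int i)) UNIV"
    by (rule indep_blocks[where K="\<lambda>i. {int i}"]) (auto simp: disjoint_family_on_def)
  thus ?thesis unfolding O.indep_vars_def Acoord_def by simp
qed

lemma sigma_algebra_Acoord: "sigma_algebra (space \<Omega>) (Acoord i)"
  unfolding Acoord_def by (rule sigma_algebra_sigma_sets) auto

lemma in_tail_sigma:
  assumes fin: "finite J" and Jn: "\<And>j. j \<in> J \<Longrightarrow> int n \<le> j"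
    and dep: "\<And>x y. (\<And>i. i \<in> J \<Longrightarrow> x i = y i) \<Longrightarrow> x \<in> S \<longleftrightarrow> y \<in> S"
  shows "S \<in> sigma_sets (space \<Omega>) (\<Union> (Acoord ` {n..}))"
proof -
  let ?\<Sigma> = "sigma_sets (space \<Omega>) (\<Union> (Acoord ` {n..}))"
  interpret sa: sigma_algebra "space \<Omega>" ?\<Sigma>
    by (rule sigma_algebra_sigma_sets) (auto simp: Acoord_def)
  have basic: "{x. x j = a} \<in> ?\<Sigma>" if "j \<in> J" for j a
  proof -
    have j: "j = int (nat j)" "nat j \<ge> n" using Jn[OF that] by auto
    have "{x. x j = a} = (\<lambda>x. x (int (nat j))) -` {a} \<inter> space \<Omega>" using j by auto
    also have "\<dots> \<in> Acoord (nat j)" unfolding Acoord_def by (intro sigma_sets.Basic) auto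
    finally have "{x. x j = a} \<in> \<Union> (Acoord ` {n..})" using j by auto
    thus ?thesis by (rule sigma_sets.Basic)
  qed
  define W where "W = (\<lambda>x. restrict x J) ` S"
  have Wfin: "finite W"
  proof (rule finite_subset)
    show "W \<subseteq> PiE J (\<lambda>_. UNIV)" unfolding W_def by auto
    show "finite (PiE J (\<lambda>_. UNIV::'a set))" using fin by (intro finite_PiE) auto
  qed
  have eq: "S = (\<Union>w\<in>W. \<Inter>j\<in>J. {x. x j = w j})"
  proof (intro equalityI subsetI)
    fix x assume "x \<in> S"
    thus "x \<in> (\<Union>w\<in>W. \<Inter>j\<in>J. {x. x j = w j})" unfolding W_def by auto
  next
    fix x assume "x \<in> (\<Union>w\<in>W. \<Inter>j\<in>J. {x. x j = w j})"
    then obtain y where y: "y \<in> S" "\<And>j. j \<in> J \<Longrightarrow> x j = y j" unfolding W_def by auto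
    show "x \<in> S" using dep[of x y] y by auto
  qed
  have "(\<Union>w\<in>W. \<Inter>j\<in>J. {x. x j = w j}) \<in> ?\<Sigma>"
  proof (rule sa.finite_UN[OF Wfin])
    fix w assume "w \<in> W"
    show "(\<Inter>j\<in>J. {x. x j = w j}) \<in> ?\<Sigma>"
    proof (cases "J = {}")
      case True thus ?thesis using sa.top by simp
    next
      case False thus ?thesis using fin basic by (intro sa.finite_INT) auto
    qed
  qed
  with eq show ?thesis by simp
qed

end

locale subadd = bern p for p :: "'a::finite pmf" +
  fixes F :: "nat \<Rightarrow> (int \<Rightarrow> 'a) \<Rightarrow> real" and C :: real
  assumes F0: "\<And>x. F 0 x = 0"
    and Fsub: "\<And>n m x. F (n + m) x \<le> F n x + F m (shift n x)"
    and Fshift: "\<And>n x. \<bar>F (Suc n) x - F n (shift 1 x)\<bar> \<le> C"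
    and Fdep: "\<And>n x y. (\<And>i. 0 \<le> i \<Longrightarrow> i < int n \<Longrightarrow> x i = y i) \<Longrightarrow> F n x = F n y"
begin

lemma C_nonneg: "C \<ge> 0"
  using Fshift[of 0 undefined] by (simp add: F0)

lemma F_bound: "\<bar>F n x\<bar> \<le> real n * C"
proof (induction n arbitrary: x)
  case 0 thus ?case by (simp add: F0)
next
  case (Suc n)
  have "\<bar>F n (shift 1 x)\<bar> \<le> real n * C" by (rule Suc.IH)
  thus ?case using Fshift[of n x] by (simp add: algebra_simps)
qed

lemma F_meas[measurable]: "F n \<in> borel_measurable \<Omega>"
  by (rule meas_dep[of "{0..<int n}"]) (auto intro: Fdep)

lemma F_shift_dep:
  assumes "\<And>i. i \<in> {int k..<int k + int n} \<Longrightarrow> x i = y i"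
  shows "F n (shift k x) = F n (shift k y)"
  by (rule Fdep) (use assms in auto)

definition Eq :: "real \<Rightarrow> (int \<Rightarrow> 'a) set" where
  "Eq q = {x. \<forall>e::nat. \<forall>N. \<exists>n\<ge>N. F n x < real n * (q + 1 / real (Suc e))}"


lemma threshold_exists:
  assumes "\<delta> > 0"
  shows "\<exists>T::nat. \<forall>n\<ge>T. real n * (\<delta>/2) \<ge> A"
proof -
  obtain T :: nat where T: "2 * A / \<delta> < real T" using reals_Archimedean2 by blast
  have "real n * (\<delta>/2) \<ge> A" if "n \<ge> T" for n
  proof -
    have "A < real T * (\<delta>/2)" using T assms by (simp add: divide_less_eq mult.commute)
    also have "\<dots> \<le> real n * (\<delta>/2)" using that assms by (intro mult_right_mono) auto
    finally show ?thesis by simp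
  qed
  thus ?thesis by blast
qed

lemma half_delta: "1 / real (Suc (2*e+1)) = (1 / real (Suc e)) / 2"
  by (simp add: field_simps)

lemma Eq_shift1_rev:
  assumes y: "shift 1 x \<in> Eq q"
  shows "x \<in> Eq q"
  unfolding Eq_def
proof (intro CollectI allI)
  fix e N :: nat
  define \<delta> where "\<delta> = 1 / real (Suc e)"
  have \<delta>0: "\<delta> > 0" by (simp add: \<delta>_def)
  obtain T where T: "\<And>n. n \<ge> T \<Longrightarrow> real n * (\<delta>/2) \<ge> C + \<bar>q\<bar> + \<delta>"
    using threshold_exists[OF \<delta>0] by blast
  from y have "\<forall>e N. \<exists>n\<ge>N. F n (shift 1 x) < real n * (q + 1 / real (Suc e))"
    unfolding Eq_def by simp
  hence "\<exists>n\<ge>max N T. F n (shift 1 x) < real n * (q + 1 / real (Suc (2*e+1)))" by blast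
  then obtain n where n: "n \<ge> max N T" "F n (shift 1 x) < real n * (q + \<delta>/2)"
    unfolding half_delta \<delta>_def by blast
  have "F (Suc n) x \<le> F n (shift 1 x) + C" using Fshift[of n x] by linarith
  moreover have "real n * (\<delta>/2) \<ge> C + \<bar>q\<bar> + \<delta>" using T n(1) by simp
  moreover have "real n * (q + \<delta>/2) = real n * q + real n * (\<delta>/2)" by (simp add: algebra_simps)
  moreover have "real (Suc n) * (q + \<delta>) = real n * q + 2 * (real n * (\<delta>/2)) + q + \<delta>" by (simp add: algebra_simps)
  ultimately have "F (Suc n) x < real (Suc n) * (q + \<delta>)" using n(2) \<delta>0 abs_ge_minus_self[of q] by linarith
  moreover have "Suc n \<ge> N" using n(1) by simp
  ultimately show "\<exists>n\<ge>N. F n x < real n * (q + 1 / real (Suc e))" unfolding \<delta>_def by blast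
qed

lemma Eq_shift1:
  assumes x: "x \<in> Eq q"
  shows "shift 1 x \<in> Eq q"
  unfolding Eq_def
proof (intro CollectI allI)
  fix e N :: nat
  define \<delta> where "\<delta> = 1 / real (Suc e)"
  have \<delta>0: "\<delta> > 0" by (simp add: \<delta>_def)
  obtain T where T: "\<And>n. n \<ge> T \<Longrightarrow> real n * (\<delta>/2) \<ge> C + \<bar>q\<bar> + \<delta>"
    using threshold_exists[OF \<delta>0] by blast
  from x have "\<forall>e N. \<exists>n\<ge>N. F n x < real n * (q + 1 / real (Suc e))"
    unfolding Eq_def by simp
  hence "\<exists>n\<ge>max (Suc N) (Suc T). F n x < real n * (q + 1 / real (Suc (2*e+1)))" by blast
  then obtain n where n: "n \<ge> max (Suc N) (Suc T)" "F n x < real n * (q + \<delta>/2)"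
    unfolding half_delta \<delta>_def by blast
  obtain n' where n': "n = Suc n'" using n(1) by (cases n) auto
  have "F n' (shift 1 x) \<le> F (Suc n') x + C" using Fshift[of n' x] by linarith
  moreover have "real n' * (\<delta>/2) \<ge> C + \<bar>q\<bar> + \<delta>" using T n(1) n' by simp
  moreover have "real (Suc n') * (q + \<delta>/2) = real n' * q + real n' * (\<delta>/2) + q + \<delta>/2" by (simp add: algebra_simps)
  moreover have "real n' * (q + \<delta>) = real n' * q + 2 * (real n' * (\<delta>/2))" by (simp add: algebra_simps)
  moreover have "F (Suc n') x < real (Suc n') * (q + \<delta>/2)" using n(2) n' by simp
  ultimately have "F n' (shift 1 x) < real n' * (q + \<delta>)" using \<delta>0 abs_ge_self[of q] by linarith
  moreover have "n' \<ge> N" using n(1) n' by simp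
  ultimately show "\<exists>n\<ge>N. F n (shift 1 x) < real n * (q + 1 / real (Suc e))" unfolding \<delta>_def by blast
qed

lemma Eq_shift: "shift k x \<in> Eq q \<longleftrightarrow> x \<in> Eq q"
proof (induction k arbitrary: x)
  case 0 thus ?case by simp
next
  case (Suc k)
  have "shift (Suc k) x = shift 1 (shift k x)" by simp
  thus ?case using Suc Eq_shift1 Eq_shift1_rev by metis
qed


lemma Eq_shift_alt: "Eq q = (\<Inter>e. \<Inter>N. \<Union>n\<in>{N..}. {x. F n (shift k x) < real n * (q + 1 / real (Suc e))})"
proof -
  have "Eq q = {x. shift k x \<in> Eq q}" using Eq_shift by auto
  also have "\<dots> = (\<Inter>e. \<Inter>N. \<Union>n\<in>{N..}. {x. F n (shift k x) < real n * (q + 1 / real (Suc e))})"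
    unfolding Eq_def by auto
  finally show ?thesis .
qed

lemma Eq_tail: "Eq q \<in> O.tail_events Acoord"
  unfolding O.tail_events_def
proof (rule InterI, safe)
  fix k
  let ?\<Sigma> = "sigma_sets (space \<Omega>) (\<Union> (Acoord ` {k..}))"
  interpret sa: sigma_algebra "space \<Omega>" ?\<Sigma>
    by (rule sigma_algebra_sigma_sets) (auto simp: Acoord_def)
  have U: "UNIV \<in> ?\<Sigma>" using sa.top by simp
  have B: "{x. F n (shift k x) < c} \<in> ?\<Sigma>" for n c
  proof (rule in_tail_sigma[of "{int k..<int k + int n}"])
    fix x y :: "int \<Rightarrow> 'a" assume "\<And>i. i \<in> {int k..<int k + int n} \<Longrightarrow> x i = y i"
    hence "F n (shift k x) = F n (shift k y)" by (rule F_shift_dep)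
    thus "(x \<in> {x. F n (shift k x) < c}) = (y \<in> {x. F n (shift k x) < c})" by simp
  qed auto
  show "Eq q \<in> ?\<Sigma>"
    unfolding Eq_shift_alt[of q k]
    by (intro sa.countable_INT''[OF U] sa.countable_UN'' B) auto
qed

lemma Acoord_events: "Acoord i \<subseteq> O.events"
  using indep_Acoord unfolding O.indep_sets_def by auto

lemma Eq_sets: "Eq q \<in> sets \<Omega>"
  using O.tail_events_sets[of Acoord, OF Acoord_events] Eq_tail by auto

lemma Eq_01: "O.prob (Eq q) = 0 \<or> O.prob (Eq q) = 1"
  by (rule O.kolmogorov_0_1_law[OF sigma_algebra_Acoord indep_Acoord Eq_tail])

lemma Eq_mono: "q \<le> q' \<Longrightarrow> Eq q \<subseteq> Eq q'"
proof
  fix x assume qq: "q \<le> q'" and x: "x \<in> Eq q"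
  show "x \<in> Eq q'" unfolding Eq_def
  proof (intro CollectI allI)
    fix e N :: nat
    from x obtain n where n: "n \<ge> N" "F n x < real n * (q + 1 / real (Suc e))" unfolding Eq_def by blast
    have "real n * (q + 1 / real (Suc e)) \<le> real n * (q' + 1 / real (Suc e))"
      using qq by (intro mult_left_mono) auto
    thus "\<exists>n\<ge>N. F n x < real n * (q' + 1 / real (Suc e))" using n by force
  qed
qed

lemma Eq_empty: assumes "q < - C" shows "Eq q = {}"
proof (rule ccontr)
  assume "Eq q \<noteq> {}"
  then obtain x where x: "x \<in> Eq q" by auto
  have "- C - q > 0" using assms by simp
  then obtain e where e: "inverse (real (Suc e)) < - C - q" using reals_Archimedean by blast
  from x obtain n where n: "n \<ge> 1" "F n x < real n * (q + 1 / real (Suc e))" unfolding Eq_def by blast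
  have "real n * (q + 1 / real (Suc e)) < real n * (- C)"
    using n(1) e by (intro mult_strict_left_mono) (auto simp: inverse_eq_divide)
  moreover have "- (real n * C) \<le> F n x" using F_bound[of n x] by (simp add: abs_le_iff)
  ultimately show False using n(2) by simp
qed

lemma Eq_full: assumes "q \<ge> C" shows "Eq q = UNIV"
proof -
  have "x \<in> Eq q" for x unfolding Eq_def
  proof (intro CollectI allI)
    fix e N :: nat
    define n where "n = max N 1"
    have "F n x \<le> real n * C" using F_bound[of n x] by (simp add: abs_le_iff)
    also have "\<dots> < real n * (q + 1 / real (Suc e))"
    proof (intro mult_strict_left_mono)
      have "0 < 1 / real (Suc e)" by simp
      thus "C < q + 1 / real (Suc e)" using assms by linarith
    qed (auto simp: n_def)
    finally have "F n x < real n * (q + 1 / real (Suc e))" .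
    moreover have "n \<ge> N" unfolding n_def by simp
    ultimately show "\<exists>n\<ge>N. F n x < real n * (q + 1 / real (Suc e))" by blast
  qed
  thus ?thesis by auto
qed

definition lam :: real where "lam = Inf {q. O.prob (Eq q) = 1}"

lemma lam_set: "{q. O.prob (Eq q) = 1} \<noteq> {}" "bdd_below {q. O.prob (Eq q) = 1}"
proof -
  have "O.prob (Eq C) = 1" using Eq_full[of C] O.prob_space by simp
  thus "{q. O.prob (Eq q) = 1} \<noteq> {}" by blast
  show "bdd_below {q. O.prob (Eq q) = 1}"
  proof (rule bdd_belowI)
    fix q assume q: "q \<in> {q. O.prob (Eq q) = 1}"
    show "- C \<le> q"
    proof (rule ccontr)
      assume "\<not> - C \<le> q" thus False using Eq_empty[of q] q by simp
    qed
  qed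
qed

lemma Eq_above: assumes "lam < q" shows "O.prob (Eq q) = 1"
proof -
  obtain q' where q': "O.prob (Eq q') = 1" "q' < q"
    using assms unfolding lam_def cInf_less_iff[OF lam_set] by auto
  have "O.prob (Eq q') \<le> O.prob (Eq q)"
    using Eq_mono[of q' q] q' Eq_sets by (intro O.finite_measure_mono) auto
  thus ?thesis using q' O.prob_le_1[of "Eq q"] by simp
qed

lemma Eq_below: assumes "q < lam" shows "O.prob (Eq q) = 0"
proof -
  have "O.prob (Eq q) \<noteq> 1"
  proof
    assume "O.prob (Eq q) = 1"
    hence "lam \<le> q" unfolding lam_def by (intro cInf_lower) (auto simp: lam_set)
    thus False using assms by simp
  qed
  thus ?thesis using Eq_01[of q] by auto
qed

lemma AE_Eq: "AE x in \<Omega>. \<forall>r::rat. (lam < of_rat r \<longrightarrow> x \<in> Eq (of_rat r)) \<and> (of_rat r < lam \<longrightarrow> x \<notin> Eq (of_rat r))"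
proof -
  have "AE x in \<Omega>. (lam < of_rat r \<longrightarrow> x \<in> Eq (of_rat r)) \<and> (of_rat r < lam \<longrightarrow> x \<notin> Eq (of_rat r))" for r
  proof -
    have a: "AE x in \<Omega>. lam < of_rat r \<longrightarrow> x \<in> Eq (of_rat r)"
    proof (cases "lam < of_rat r")
      case True thus ?thesis using O.AE_prob_1[OF Eq_above[OF True]] by simp
    qed simp
    have b: "AE x in \<Omega>. of_rat r < lam \<longrightarrow> x \<notin> Eq (of_rat r)"
    proof (cases "of_rat r < lam")
      case True
      have "Eq (of_rat r) \<in> null_sets \<Omega>"
        using Eq_below[OF True] Eq_sets by (intro null_setsI) (auto simp: O.emeasure_eq_measure)
      thus ?thesis using AE_not_in by (auto elim!: eventually_mono)
    qed simp
    show ?thesis using a b by (auto elim!: eventually_elim2)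
  qed
  thus ?thesis by (simp add: AE_all_countable)
qed

end

lemma covering:
  fixes G :: "nat \<Rightarrow> nat \<Rightarrow> real" and bad :: "nat \<Rightarrow> bool"
  assumes G0: "\<And>j. G j 0 = 0"
    and Gsub: "\<And>j n m. G j (n+m) \<le> G j n + G (j+n) m"
    and Gub: "\<And>j n. G j n \<le> real n * C"
    and good: "\<And>j. \<not> bad j \<Longrightarrow> \<exists>n. 1 \<le> n \<and> n \<le> M \<and> G j n \<le> real n * \<mu>"
    and D: "C - \<mu> \<le> D" "0 \<le> D"
  shows "G j L \<le> real L * \<mu> + D * ((\<Sum>i\<in>{j..<j+L}. if bad i then 1 else 0) + real M)"
proof (induction L arbitrary: j rule: less_induct)
  case (less L)
  define cnt where "cnt j L = (\<Sum>i\<in>{j..<j+L}. if bad i then 1 else (0::real))" for j L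
  have cnt_nn: "cnt j L \<ge> 0" for j L unfolding cnt_def by (intro sum_nonneg) auto
  have IH: "\<And>L' j. L' < L \<Longrightarrow> G j L' \<le> real L' * \<mu> + D * (cnt j L' + real M)"
    using less unfolding cnt_def by blast
  show ?case unfolding cnt_def[symmetric]
  proof (cases "L = 0")
    case True
    thus "G j L \<le> real L * \<mu> + D * (cnt j L + real M)" using G0 D(2) cnt_nn[of j L] by simp
  next
    case False
    hence L1: "L \<ge> 1" by simp
    show "G j L \<le> real L * \<mu> + D * (cnt j L + real M)"
    proof (cases "bad j")
      case True
      have split: "cnt j L = 1 + cnt (j+1) (L-1)"
        unfolding cnt_def using L1 True by (simp add: sum.atLeast_Suc_lessThan)
      have "G j L = G j (1 + (L-1))" using L1 by simp
      also have "\<dots> \<le> G j 1 + G (j+1) (L-1)" by (rule Gsub)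
      also have "G j 1 \<le> C" using Gub[of j 1] by simp
      also have "G (j+1) (L-1) \<le> real (L-1) * \<mu> + D * (cnt (j+1) (L-1) + real M)"
        using IH[of "L-1" "j+1"] L1 by simp
      finally have "G j L \<le> C + real (L-1) * \<mu> + D * (cnt (j+1) (L-1) + real M)" by simp
      moreover have "real (L-1) * \<mu> = real L * \<mu> - \<mu>" using L1 by (simp add: of_nat_diff algebra_simps)
      moreover have "D * (cnt j L + real M) = D + D * (cnt (j+1) (L-1) + real M)"
        unfolding split by (simp add: algebra_simps)
      ultimately show ?thesis using D(1) by linarith
    next
      case False
      then obtain n where n: "1 \<le> n" "n \<le> M" "G j n \<le> real n * \<mu>" using good by blast
      show ?thesis
      proof (cases "n \<le> L")
        case True
        have "G j L = G j (n + (L-n))" using True by simp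
        also have "\<dots> \<le> G j n + G (j+n) (L-n)" by (rule Gsub)
        also have "G (j+n) (L-n) \<le> real (L-n) * \<mu> + D * (cnt (j+n) (L-n) + real M)"
          using IH[of "L-n" "j+n"] n(1) True by simp
        finally have A: "G j L \<le> real n * \<mu> + real (L-n) * \<mu> + D * (cnt (j+n) (L-n) + real M)"
          using n(3) by simp
        have "cnt (j+n) (L-n) \<le> cnt j L" unfolding cnt_def
          by (rule sum_mono2) (use True in auto)
        hence "D * (cnt (j+n) (L-n) + real M) \<le> D * (cnt j L + real M)"
          using D(2) by (intro mult_left_mono) auto
        moreover have "real n * \<mu> + real (L-n) * \<mu> = real L * \<mu>"
          using True by (simp add: of_nat_diff algebra_simps)
        ultimately show ?thesis using A by linarith
      next
        case False
        have "G j L \<le> real L * C" by (rule Gub)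
        also have "\<dots> = real L * \<mu> + real L * (C - \<mu>)" by (simp add: algebra_simps)
        also have "real L * (C - \<mu>) \<le> real L * D" using D(1) by (intro mult_left_mono) auto
        also have "real L * D \<le> real M * D" using False n(2) D(2) by (intro mult_right_mono) auto
        also have "real M * D \<le> D * (cnt j L + real M)" using cnt_nn[of j L] D(2)
          by (simp add: algebra_simps)
        finally show ?thesis by simp
      qed
    qed
  qed
qed


context subadd
begin

definition Bd :: "real \<Rightarrow> nat \<Rightarrow> (int \<Rightarrow> 'a) set" where
  "Bd \<mu> M = {y. \<forall>n. 1 \<le> n \<and> n \<le> M \<longrightarrow> real n * \<mu> < F n y}"

lemma Bd_dep:
  assumes "\<And>i. 0 \<le> i \<Longrightarrow> i < int (Suc M) \<Longrightarrow> x i = y i"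
  shows "x \<in> Bd \<mu> M \<longleftrightarrow> y \<in> Bd \<mu> M"
proof -
  have "F n x = F n y" if "n \<le> M" for n
    by (rule Fdep) (use assms that in auto)
  thus ?thesis unfolding Bd_def by auto
qed

lemma Bd_sets: "Bd \<mu> M \<in> sets \<Omega>"
proof -
  have "{y. y \<in> Bd \<mu> M} \<in> sets \<Omega>"
    by (rule sets_dep[of "{0..<int (Suc M)}"]) (auto intro!: Bd_dep)
  thus ?thesis by simp
qed

lemma slln_Bd:
  "AE x in \<Omega>. (\<lambda>N. (\<Sum>j<N. indicator (Bd \<mu> M) (shift j x)) / real N) \<longlonglongrightarrow> O.prob (Bd \<mu> M)"
proof -
  have "AE x in \<Omega>. (\<lambda>N. (\<Sum>j<N. (indicator (Bd \<mu> M) :: _ \<Rightarrow> real) (shift j x)) / real N)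
          \<longlonglongrightarrow> O.expectation (indicator (Bd \<mu> M))"
  proof (rule slln_block[where m="Suc M" and H=1])
    fix x y :: "int \<Rightarrow> 'a" assume "\<And>i. 0 \<le> i \<Longrightarrow> i < int (Suc M) \<Longrightarrow> x i = y i"
    hence "x \<in> Bd \<mu> M \<longleftrightarrow> y \<in> Bd \<mu> M" by (rule Bd_dep)
    thus "(indicator (Bd \<mu> M) x :: real) = indicator (Bd \<mu> M) y" by (simp add: indicator_def)
  qed (auto simp: indicator_def)
  thus ?thesis by simp
qed

lemma Bd_lim:
  assumes "lam < \<mu>"
  shows "(\<lambda>M. O.prob (Bd \<mu> M)) \<longlonglongrightarrow> 0"
proof -
  have dec: "decseq (Bd \<mu>)" unfolding decseq_def Bd_def by auto
  have rng: "range (Bd \<mu>) \<subseteq> sets \<Omega>" using Bd_sets by auto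
  obtain r :: rat where r: "lam < of_rat r" "of_rat r < \<mu>" using of_rat_dense[OF assms] by blast
  have ae: "AE y in \<Omega>. y \<in> Eq (of_rat r)" using O.AE_prob_1[OF Eq_above[OF r(1)]] .
  have "AE y in \<Omega>. y \<notin> (\<Inter>M. Bd \<mu> M)"
    using ae
  proof (rule eventually_mono)
    fix y assume y: "y \<in> Eq (of_rat r)"
    have "\<mu> - of_rat r > 0" using r by simp
    then obtain e where e: "inverse (real (Suc e)) < \<mu> - of_rat r" using reals_Archimedean by blast
    from y obtain n where n: "n \<ge> 1" "F n y < real n * (of_rat r + 1 / real (Suc e))"
      unfolding Eq_def by blast
    have "real n * (of_rat r + 1 / real (Suc e)) \<le> real n * \<mu>"
      using e by (intro mult_left_mono) (auto simp: inverse_eq_divide)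
    hence "F n y < real n * \<mu>" using n(2) by linarith
    hence "y \<notin> Bd \<mu> n" unfolding Bd_def using n(1) by force
    thus "y \<notin> (\<Inter>M. Bd \<mu> M)" by auto
  qed
  hence "emeasure \<Omega> (\<Inter>M. Bd \<mu> M) = 0"
    using rng by (subst (asm) AE_iff_measurable[of "\<Inter>M. Bd \<mu> M"]) auto
  hence "O.prob (\<Inter>M. Bd \<mu> M) = 0" by (simp add: O.emeasure_eq_measure)
  thus ?thesis using O.finite_Lim_measure_decseq[OF rng dec] by simp
qed

theorem kingman: "AE x in \<Omega>. (\<lambda>n. F n x / real n) \<longlonglongrightarrow> lam"
proof -
  have ae2: "AE x in \<Omega>. \<forall>\<mu>::rat. \<forall>M::nat.
     (\<lambda>N. (\<Sum>j<N. indicator (Bd (of_rat \<mu>) M) (shift j x)) / real N) \<longlonglongrightarrow> O.prob (Bd (of_rat \<mu>) M)"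
    by (simp add: AE_all_countable slln_Bd)
  show ?thesis using AE_Eq ae2
  proof (eventually_elim)
    case (elim x)
    note E = elim(1) and S = elim(2)
    show "(\<lambda>n. F n x / real n) \<longlonglongrightarrow> lam"
    proof (rule tendstoI)
      fix \<epsilon> :: real assume \<epsilon>: "\<epsilon> > 0"
      obtain r :: rat where r: "lam - \<epsilon> < of_rat r" "of_rat r < lam"
        using of_rat_dense[of "lam - \<epsilon>" lam] \<epsilon> by auto
      have "x \<notin> Eq (of_rat r)" using E r(2) by blast
      then obtain e N0 where eN: "\<And>n. n \<ge> N0 \<Longrightarrow> \<not> F n x < real n * (of_rat r + 1 / real (Suc e))"
        unfolding Eq_def by blast
      have low: "real n * (lam - \<epsilon>) < F n x" if "n \<ge> max N0 1" for n
      proof -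
        have lt: "real n * (lam - \<epsilon>) < real n * (of_rat r + 1 / real (Suc e))"
        proof (intro mult_strict_left_mono)
          have "0 < 1 / real (Suc e)" by simp
          thus "lam - \<epsilon> < of_rat r + 1 / real (Suc e)" using r(1) by linarith
        qed (use that in auto)
        have "\<not> F n x < real n * (of_rat r + 1 / real (Suc e))" using eN[of n] that by simp
        thus ?thesis using lt by linarith
      qed
      obtain \<mu>q :: rat where \<mu>q: "lam < of_rat \<mu>q" "of_rat \<mu>q < lam + \<epsilon>/2"
        using of_rat_dense[of lam "lam + \<epsilon>/2"] \<epsilon> by auto
      define \<mu> where "\<mu> = (of_rat \<mu>q :: real)"
      define D where "D = C + \<bar>\<mu>\<bar> + 1"
      have D0: "D > 0" using C_nonneg by (simp add: D_def)
      define \<eta> where "\<eta> = \<epsilon> / (8 * D)"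
      have \<eta>0: "\<eta> > 0" using \<epsilon> D0 by (simp add: \<eta>_def)
      have "eventually (\<lambda>M. dist (O.prob (Bd \<mu> M)) 0 < \<eta>) sequentially"
        using tendstoD[OF Bd_lim \<eta>0] \<mu>q(1) unfolding \<mu>_def by blast
      then obtain M where M: "O.prob (Bd \<mu> M) < \<eta>"
        by (auto simp: eventually_sequentially)
      have "eventually (\<lambda>N. dist ((\<Sum>j<N. indicator (Bd \<mu> M) (shift j x)) / real N) (O.prob (Bd \<mu> M)) < \<eta>) sequentially"
        using tendstoD[OF S[rule_format, of \<mu>q M] \<eta>0] unfolding \<mu>_def by simp
      then obtain N1 where N1': "\<And>N. N \<ge> N1 \<Longrightarrow> \<bar>(\<Sum>j<N. indicator (Bd \<mu> M) (shift j x)) / real N - O.prob (Bd \<mu> M)\<bar> < \<eta>"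
        by (auto simp: eventually_sequentially dist_real_def)
      have N1: "(\<Sum>j<N. indicator (Bd \<mu> M) (shift j x)) / real N < 2 * \<eta>" if "N \<ge> N1" for N
        using N1'[OF that] M by (simp add: abs_less_iff)
      obtain N2 :: nat where N2: "4 * D * real M / \<epsilon> < real N2" using reals_Archimedean2 by blast
      have up: "F N x < real N * (lam + \<epsilon>)" if N: "N \<ge> max (max N1 N2) 1" for N
      proof -
        define cnt where "cnt = (\<Sum>j<N. indicator (Bd \<mu> M) (shift j x) :: real)"
        have Npos: "real N > 0" using N by simp
        have cov: "F N x \<le> real N * \<mu> + D * (cnt + real M)"
        proof -
          have "F N (shift 0 x) \<le> real N * \<mu> + D * ((\<Sum>i\<in>{0..<0+N}. if shift i x \<in> Bd \<mu> M then 1 else 0) + real M)"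
          proof (rule covering[where G="\<lambda>j n. F n (shift j x)" and C=C])
            show "\<And>j. F 0 (shift j x) = 0" by (rule F0)
            show "\<And>j n m. F (n + m) (shift j x) \<le> F n (shift j x) + F m (shift (j + n) x)"
              using Fsub by (metis add.commute shift_shift)
            show "\<And>j n. F n (shift j x) \<le> real n * C" using F_bound by (auto simp: abs_le_iff)
            show "\<And>j. shift j x \<notin> Bd \<mu> M \<Longrightarrow> \<exists>n\<ge>1. n \<le> M \<and> F n (shift j x) \<le> real n * \<mu>"
              unfolding Bd_def by (auto simp: not_less)
            show "C - \<mu> \<le> D" "0 \<le> D" unfolding D_def using C_nonneg by auto
          qed
          moreover have "(\<Sum>i\<in>{0..<0+N}. if shift i x \<in> Bd \<mu> M then 1 else 0) = cnt"
            unfolding cnt_def add_0 atLeast0LessThan by (rule sum.cong) (auto simp: indicator_def)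
          ultimately show ?thesis by simp
        qed
        have "cnt / real N < 2 * \<eta>" using N1[of N] N unfolding cnt_def by simp
        hence "cnt < real N * (2 * \<eta>)" using Npos by (simp add: divide_less_eq mult.commute)
        hence "D * cnt \<le> D * (real N * (2 * \<eta>))" using D0 by (intro mult_left_mono) auto
        also have "D * (real N * (2 * \<eta>)) = real N * \<epsilon> / 4" using D0 by (simp add: \<eta>_def)
        finally have c1: "D * cnt \<le> real N * \<epsilon> / 4" .
        have "4 * D * real M / \<epsilon> < real N" using N2 N by linarith
        hence "4 * D * real M < real N * \<epsilon>" using \<epsilon> by (simp add: divide_less_eq)
        hence c2: "D * real M < real N * \<epsilon> / 4" by simp
        have "real N * \<mu> \<le> real N * (lam + \<epsilon>/2)" using \<mu>q(2) unfolding \<mu>_def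
          by (intro mult_left_mono) auto
        moreover have "real N * (lam + \<epsilon>/2) = real N * lam + real N * \<epsilon> / 2" by (simp add: algebra_simps)
        moreover have "real N * (lam + \<epsilon>) = real N * lam + real N * \<epsilon>" by (simp add: algebra_simps)
        moreover have "D * (cnt + real M) = D * cnt + D * real M" by (simp add: algebra_simps)
        moreover have "real N * \<epsilon> > 0" using Npos \<epsilon> by simp
        ultimately show ?thesis using cov c1 c2 by linarith
      qed
      show "eventually (\<lambda>n. dist (F n x / real n) lam < \<epsilon>) sequentially"
        unfolding eventually_sequentially
      proof (intro exI[of _ "max (max N0 1) (max (max N1 N2) 1)"] allI impI)
        fix n assume n: "max (max N0 1) (max (max N1 N2) 1) \<le> n"
        have npos: "real n > 0" using n by simp
        have l: "real n * (lam - \<epsilon>) < F n x" using low n by simp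
        have u: "F n x < real n * (lam + \<epsilon>)" using up n by simp
        have "lam - \<epsilon> < F n x / real n" using l npos by (simp add: pos_less_divide_eq mult.commute)
        moreover have "F n x / real n < lam + \<epsilon>" using u npos by (simp add: pos_divide_less_eq mult.commute)
        ultimately show "dist (F n x / real n) lam < \<epsilon>" by (simp add: dist_real_def abs_less_iff)
      qed
    qed
  qed
qed

end

lemma mnorm_bl: "bounded_linear (\<lambda>v. (M::mat2) *v v)"
  by simp

lemma mnorm_app: "norm (M *v v) \<le> mnorm M * norm v"
  unfolding mnorm_def by (rule onorm[OF mnorm_bl])

lemma mnorm_le: "(\<And>v. norm (M *v v) \<le> b * norm v) \<Longrightarrow> mnorm M \<le> b"
  unfolding mnorm_def by (rule onorm_le)

lemma mnorm_nonneg: "mnorm M \<ge> 0"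
  unfolding mnorm_def by (rule onorm_pos_le[OF mnorm_bl])

lemma mnorm_mult: "mnorm (A ** B) \<le> mnorm A * mnorm B"
proof (rule mnorm_le)
  fix v
  have "norm ((A ** B) *v v) = norm (A *v (B *v v))" by (simp add: matrix_vector_mul_assoc)
  also have "\<dots> \<le> mnorm A * norm (B *v v)" by (rule mnorm_app)
  also have "\<dots> \<le> mnorm A * (mnorm B * norm v)" by (intro mult_left_mono mnorm_app mnorm_nonneg)
  finally show "norm ((A ** B) *v v) \<le> mnorm A * mnorm B * norm v" by (simp add: mult.assoc)
qed

lemma mnorm_scale: "mnorm (c *\<^sub>R M) = \<bar>c\<bar> * mnorm M"
proof -
  have "(\<lambda>v. (c *\<^sub>R M) *v v) = (\<lambda>v. c *\<^sub>R (M *v v))"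
    by (simp add: scaleR_matrix_vector_assoc)
  hence "mnorm (c *\<^sub>R M) = onorm (\<lambda>v. c *\<^sub>R (M *v v))" unfolding mnorm_def by simp
  also have "\<dots> = \<bar>c\<bar> * onorm (\<lambda>v. M *v v)" by (rule onorm_scaleR[OF mnorm_bl])
  finally show ?thesis unfolding mnorm_def .
qed

lemma mnorm_id: "mnorm (mat 1) = 1"
proof -
  have eq: "((*v) (mat 1 :: mat2)) = (\<lambda>v. v)" by (rule ext) simp
  show ?thesis unfolding mnorm_def eq by (rule onorm_id)
qed

lemma mnorm_triangle: "mnorm (A + B) \<le> mnorm A + mnorm B"
proof (rule mnorm_le)
  fix v
  have "norm ((A + B) *v v) = norm (A *v v + B *v v)" by (simp add: matrix_vector_mult_add_rdistrib)
  also have "\<dots> \<le> norm (A *v v) + norm (B *v v)" by (rule norm_triangle_ineq)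
  also have "\<dots> \<le> mnorm A * norm v + mnorm B * norm v" by (intro add_mono mnorm_app)
  finally show "norm ((A + B) *v v) \<le> (mnorm A + mnorm B) * norm v" by (simp add: algebra_simps)
qed

lemma mnorm_minus_commute: "mnorm (A - B) = mnorm (B - A)"
proof -
  have "B - A = (-1::real) *\<^sub>R (A - B)" by simp
  hence "mnorm (B - A) = \<bar>-1::real\<bar> * mnorm (A - B)" using mnorm_scale[of "-1" "A - B"] by simp
  thus ?thesis by simp
qed

lemma mnorm_diff_triangle: "mnorm (A - C) \<le> mnorm (A - B) + mnorm (B - C)"
  using mnorm_triangle[of "A - B" "B - C"] by simp

lemma mnorm_ge_norm_diff: "mnorm A \<le> mnorm B + mnorm (A - B)"
  using mnorm_triangle[of B "A - B"] by simp

lemma entry_le_mnorm: "\<bar>M $ i $ j\<bar> \<le> mnorm M"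
proof -
  let ?v = "axis j (1::real) :: real^2"
  have "M $ i $ j = (M *v ?v) $ i"
    by (simp add: matrix_vector_mult_def axis_def if_distrib cong: if_cong)
  hence "\<bar>M $ i $ j\<bar> \<le> norm (M *v ?v)" using component_le_norm_cart[of "M *v ?v" i] by simp
  also have "\<dots> \<le> mnorm M * norm ?v" by (rule mnorm_app)
  also have "norm ?v = 1" by simp
  finally show ?thesis by simp
qed

lemma det2_lip:
  fixes X Y :: mat2
  assumes "mnorm X \<le> R" "mnorm Y \<le> R"
  shows "\<bar>det X - det Y\<bar> \<le> 4 * R * mnorm (X - Y)"
proof -
  define d where "d = mnorm (X - Y)"
  have e: "\<bar>X$i$j - Y$i$j\<bar> \<le> d" for i j using entry_le_mnorm[of "X - Y" i j] by (simp add: d_def)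
  have x: "\<bar>X$i$j\<bar> \<le> R" for i j using entry_le_mnorm[of X i j] assms by simp
  have y: "\<bar>Y$i$j\<bar> \<le> R" for i j using entry_le_mnorm[of Y i j] assms by simp
  have eq: "det X - det Y = (X$1$1 - Y$1$1) * X$2$2 + Y$1$1 * (X$2$2 - Y$2$2)
      - (X$1$2 - Y$1$2) * X$2$1 - Y$1$2 * (X$2$1 - Y$2$1)"
    by (simp add: det_2 algebra_simps)
  have b: "\<bar>a * b\<bar> \<le> d * R" if "\<bar>a\<bar> \<le> d" "\<bar>b\<bar> \<le> R" for a b :: real
    unfolding abs_mult using that by (intro mult_mono) auto
  have b': "\<bar>a * b\<bar> \<le> d * R" if "\<bar>a\<bar> \<le> R" "\<bar>b\<bar> \<le> d" for a b :: real
    using b[OF that(2) that(1)] by (simp add: mult.commute)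
  have "\<bar>det X - det Y\<bar> \<le> d * R + d * R + d * R + d * R"
    unfolding eq using b[OF e x, of 1 1 2 2] b'[OF y e, of 1 1 2 2] b[OF e x, of 1 2 2 1] b'[OF y e, of 1 2 2 1]
    by linarith
  thus ?thesis by (simp add: d_def algebra_simps)
qed

lemma det_scaleR2: "det (c *\<^sub>R (M::mat2)) = c\<^sup>2 * det M"
  by (simp add: det_2 power2_eq_square algebra_simps)

lemma mnorm_pos_inv:
  fixes M :: mat2
  assumes "det M \<noteq> 0"
  obtains Mi where "M ** Mi = mat 1" "Mi ** M = mat 1" "mnorm M > 0" "mnorm Mi > 0"
proof -
  have "invertible M" using assms by (simp add: invertible_det_nz)
  then obtain Mi where Mi: "M ** Mi = mat 1" "Mi ** M = mat 1" unfolding invertible_def by auto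
  have "1 \<le> mnorm M * mnorm Mi" using mnorm_mult[of M Mi] Mi by (simp add: mnorm_id)
  hence "mnorm M > 0" "mnorm Mi > 0" using mnorm_nonneg[of M] mnorm_nonneg[of Mi]
    by (auto simp: zero_less_mult_iff less_le)
  thus ?thesis using Mi that by blast
qed


lemma coc_iter_add: "coc_iter B (n + m) x = coc_iter B m (shift n x) ** coc_iter B n x"
proof (induction m)
  case 0 thus ?case by simp
next
  case (Suc m)
  have "coc_iter B (n + Suc m) x = B (x (int (n+m))) ** coc_iter B (n+m) x" by simp
  also have "\<dots> = (B (x (int (n+m))) ** coc_iter B m (shift n x)) ** coc_iter B n x"
    by (simp only: Suc matrix_mul_assoc)
  also have "B (x (int (n+m))) ** coc_iter B m (shift n x) = coc_iter B (Suc m) (shift n x)"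
    by (simp add: add.commute)
  finally show ?case .
qed

lemma coc_iter_Suc': "coc_iter B (Suc n) x = coc_iter B n (shift 1 x) ** B (x 0)"
  using coc_iter_add[of B 1 n x] by simp

lemma det_coc: "det (coc_iter B n x) = (\<Prod>i<n. det (B (x (int i))))"
  by (induction n) (simp_all add: det_mul)

lemma coc_dep: "(\<And>i. 0 \<le> i \<Longrightarrow> i < int n \<Longrightarrow> x i = y i) \<Longrightarrow> coc_iter B n x = coc_iter B n y"
  by (induction n) auto

lemma coc_scale:
  assumes "\<And>j. B j = s j *\<^sub>R B' j"
  shows "coc_iter B n x = (\<Prod>i<n. s (x (int i))) *\<^sub>R coc_iter B' n x"
proof (induction n)
  case 0 thus ?case by simp
next
  case (Suc n)
  have "coc_iter B (Suc n) x = (s (x (int n)) *\<^sub>R B' (x (int n))) ** ((\<Prod>i<n. s (x (int i))) *\<^sub>R coc_iter B' n x)"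
    by (simp add: Suc assms)
  also have "\<dots> = (s (x (int n)) * (\<Prod>i<n. s (x (int i)))) *\<^sub>R (B' (x (int n)) ** coc_iter B' n x)"
    by (simp add: matrix_scalar_ac scalar_matrix_assoc[symmetric])
  finally show ?case by (simp add: mult.commute)
qed

lemma GL2_det: "B \<in> GL2 \<Longrightarrow> det (coc_iter B n x) \<noteq> 0"
  by (simp add: det_coc GL2_def)

lemma det_mnorm_pos: assumes "det M \<noteq> 0" shows "mnorm M > 0"
  by (rule mnorm_pos_inv[OF assms])

lemma GL2_mnorm_pos: "B \<in> GL2 \<Longrightarrow> mnorm (coc_iter B n x) > 0"
  by (rule det_mnorm_pos[OF GL2_det])

lemma GL2_mnorm_pos1: "B \<in> GL2 \<Longrightarrow> mnorm (B j) > 0"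
  by (rule det_mnorm_pos) (simp add: GL2_def)

lemma ln_mult_le:
  fixes a b c :: real
  assumes "a > 0" "b > 0" "c > 0" "c \<le> a * b"
  shows "ln c \<le> ln a + ln b"
proof -
  have "ln c \<le> ln (a * b)" using assms by simp
  also have "ln (a * b) = ln a + ln b" using assms by (simp add: ln_mult)
  finally show ?thesis .
qed

definition cinv :: "mat2 \<Rightarrow> mat2" where
  "cinv M = (SOME Mi. M ** Mi = mat 1 \<and> Mi ** M = mat 1)"

lemma cinv: assumes "det M \<noteq> 0" shows "M ** cinv M = mat 1" "cinv M ** M = mat 1" "mnorm (cinv M) > 0"
proof -
  obtain Mi where "M ** Mi = mat 1" "Mi ** M = mat 1" by (rule mnorm_pos_inv[OF assms])
  hence *: "M ** cinv M = mat 1 \<and> cinv M ** M = mat 1" unfolding cinv_def by (rule someI[of _ Mi, OF conjI])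
  thus "M ** cinv M = mat 1" "cinv M ** M = mat 1" by auto
  have "1 \<le> mnorm M * mnorm (cinv M)" using mnorm_mult[of M "cinv M"] * by (simp add: mnorm_id)
  thus "mnorm (cinv M) > 0" using mnorm_nonneg[of M] mnorm_nonneg[of "cinv M"]
    by (auto simp: zero_less_mult_iff less_le)
qed

context bern
begin

lemma Lplus_eq:
  assumes "AE x in \<Omega>. (\<lambda>n. ln (mnorm (coc_iter B n x)) / real n) \<longlonglongrightarrow> L"
  shows "Lplus p B = L"
  unfolding Lplus_def
proof (rule the_equality)
  show "AE x in \<Omega>. (\<lambda>n. ln (mnorm (coc_iter B n x)) / real n) \<longlonglongrightarrow> L" by (rule assms)
next
  fix L' assume "AE x in \<Omega>. (\<lambda>n. ln (mnorm (coc_iter B n x)) / real n) \<longlonglongrightarrow> L'"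
  with assms have "AE x in \<Omega>. L' = L"
    by eventually_elim (rule LIMSEQ_unique)
  hence "AE x in \<Omega>. False \<or> L' = L" by simp
  thus "L' = L" using O.AE_False by (cases "L' = L") auto
qed

definition Cof :: "('a \<Rightarrow> mat2) \<Rightarrow> real" where
  "Cof B = (\<Sum>j\<in>UNIV. \<bar>ln (mnorm (B j))\<bar> + \<bar>ln (mnorm (cinv (B j)))\<bar>)"

lemma subadd_GL2:
  assumes B: "B \<in> GL2"
  shows "subadd (\<lambda>n x. ln (mnorm (coc_iter B n x))) (Cof B)"
proof (unfold_locales)
  fix x show "ln (mnorm (coc_iter B 0 x)) = 0" by (simp add: mnorm_id)
next
  fix n m x
  have "mnorm (coc_iter B (n+m) x) \<le> mnorm (coc_iter B m (shift n x)) * mnorm (coc_iter B n x)"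
    unfolding coc_iter_add by (rule mnorm_mult)
  hence "ln (mnorm (coc_iter B (n+m) x)) \<le> ln (mnorm (coc_iter B m (shift n x))) + ln (mnorm (coc_iter B n x))"
    by (intro ln_mult_le GL2_mnorm_pos[OF B])
  thus "ln (mnorm (coc_iter B (n + m) x)) \<le> ln (mnorm (coc_iter B n x)) + ln (mnorm (coc_iter B m (shift n x)))"
    by simp
next
  fix n x
  define P where "P = coc_iter B n (shift 1 x)"
  define B0 where "B0 = B (x 0)"
  have dB0: "det B0 \<noteq> 0" using B by (simp add: B0_def GL2_def)
  have Q: "coc_iter B (Suc n) x = P ** B0" unfolding P_def B0_def by (rule coc_iter_Suc')
  have Pp: "mnorm P > 0" unfolding P_def by (rule GL2_mnorm_pos[OF B])
  have Qp: "mnorm (P ** B0) > 0" using GL2_mnorm_pos[OF B, of "Suc n" x] Q by simp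
  have B0p: "mnorm B0 > 0" unfolding B0_def by (rule GL2_mnorm_pos1[OF B])
  have Bip: "mnorm (cinv B0) > 0" by (rule cinv(3)[OF dB0])
  have "mnorm (P ** B0) \<le> mnorm P * mnorm B0" by (rule mnorm_mult)
  hence u: "ln (mnorm (P ** B0)) \<le> ln (mnorm P) + ln (mnorm B0)"
    using Pp B0p Qp by (intro ln_mult_le)
  have "P = (P ** B0) ** cinv B0" by (simp add: matrix_mul_assoc[symmetric] cinv(1)[OF dB0])
  hence "mnorm P \<le> mnorm (P ** B0) * mnorm (cinv B0)" using mnorm_mult[of "P ** B0" "cinv B0"] by simp
  hence l: "ln (mnorm P) \<le> ln (mnorm (P ** B0)) + ln (mnorm (cinv B0))"
    using Pp Bip Qp by (intro ln_mult_le)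
  have "\<bar>ln (mnorm (B (x 0)))\<bar> + \<bar>ln (mnorm (cinv (B (x 0))))\<bar> \<le> Cof B"
    unfolding Cof_def by (rule member_le_sum) auto
  hence "\<bar>ln (mnorm B0)\<bar> + \<bar>ln (mnorm (cinv B0))\<bar> \<le> Cof B" by (simp add: B0_def)
  thus "\<bar>ln (mnorm (coc_iter B (Suc n) x)) - ln (mnorm (coc_iter B n (shift 1 x)))\<bar> \<le> Cof B"
    unfolding Q P_def[symmetric] using u l by linarith
next
  fix n and x y :: "int \<Rightarrow> 'a"
  assume "\<And>i. 0 \<le> i \<Longrightarrow> i < int n \<Longrightarrow> x i = y i"
  hence "coc_iter B n x = coc_iter B n y" by (rule coc_dep)
  thus "ln (mnorm (coc_iter B n x)) = ln (mnorm (coc_iter B n y))" by simp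
qed

lemma Lplus_AE:
  assumes B: "B \<in> GL2"
  shows "AE x in \<Omega>. (\<lambda>n. ln (mnorm (coc_iter B n x)) / real n) \<longlonglongrightarrow> Lplus p B"
proof -
  interpret S: subadd p "\<lambda>n x. ln (mnorm (coc_iter B n x))" "Cof B" by (rule subadd_GL2[OF B])
  have "AE x in \<Omega>. (\<lambda>n. ln (mnorm (coc_iter B n x)) / real n) \<longlonglongrightarrow> S.lam" by (rule S.kingman)
  moreover from this have "Lplus p B = S.lam" by (rule Lplus_eq)
  ultimately show ?thesis by simp
qed

end

definition phi :: "('a \<Rightarrow> mat2) \<Rightarrow> 'a \<Rightarrow> real" where
  "phi B j = ln (sqrt \<bar>det (B j)\<bar>)"

lemma SL2_GL2: "SL2 \<subseteq> GL2"
proof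
  fix B :: "'a \<Rightarrow> mat2" assume "B \<in> SL2"
  hence "\<bar>det (B j)\<bar> = 1" for j unfolding SL2_def by auto
  hence "det (B j) \<noteq> 0" for j by (metis abs_zero zero_neq_one)
  thus "B \<in> GL2" unfolding GL2_def by auto
qed

lemma norm_scale:
  assumes "B \<in> GL2"
  shows "B j = sqrt \<bar>det (B j)\<bar> *\<^sub>R normalize_coc B j"
proof -
  have "sqrt \<bar>det (B j)\<bar> > 0" using assms by (simp add: GL2_def)
  thus ?thesis by (simp add: normalize_coc_def)
qed

lemma norm_SL2:
  assumes "B \<in> GL2"
  shows "normalize_coc B \<in> SL2"
proof -
  have "\<bar>det (normalize_coc B j)\<bar> = 1" for j
  proof -
    have d: "det (B j) \<noteq> 0" using assms by (simp add: GL2_def)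
    have "det (normalize_coc B j) = (1 / sqrt \<bar>det (B j)\<bar>)\<^sup>2 * det (B j)"
      unfolding normalize_coc_def by (rule det_scaleR2)
    also have "(1 / sqrt \<bar>det (B j)\<bar>)\<^sup>2 = 1 / \<bar>det (B j)\<bar>"
      by (simp add: power_divide)
    finally show ?thesis using d by (simp add: abs_mult)
  qed
  thus ?thesis unfolding SL2_def by simp
qed

lemma ln_mult_pos: "(a::real) > 0 \<Longrightarrow> b > 0 \<Longrightarrow> ln (a * b) = ln a + ln b"
  by (simp add: ln_mult)

lemma f_split:
  assumes B: "B \<in> GL2"
  shows "ln (mnorm (coc_iter B n x)) = ln (mnorm (coc_iter (normalize_coc B) n x)) + (\<Sum>i<n. phi B (x (int i)))"
proof -
  define s where "s j = sqrt \<bar>det (B j)\<bar>" for j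
  have s0: "s j > 0" for j using B by (simp add: s_def GL2_def)
  have "coc_iter B n x = (\<Prod>i<n. s (x (int i))) *\<^sub>R coc_iter (normalize_coc B) n x"
    by (rule coc_scale) (simp add: s_def norm_scale[OF B, symmetric])
  hence "mnorm (coc_iter B n x) = (\<Prod>i<n. s (x (int i))) * mnorm (coc_iter (normalize_coc B) n x)"
    using s0 by (simp add: mnorm_scale prod_pos abs_of_pos)
  moreover have "mnorm (coc_iter (normalize_coc B) n x) > 0"
    by (rule GL2_mnorm_pos) (use norm_SL2[OF B] SL2_GL2 in auto)
  moreover have "(\<Prod>i<n. s (x (int i))) > 0" using s0 by (simp add: prod_pos)
  moreover have "ln (\<Prod>i<n. s (x (int i))) = (\<Sum>i<n. phi B (x (int i)))"
    using s0 by (simp add: ln_prod phi_def s_def[symmetric] less_imp_neq[symmetric])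
  ultimately show ?thesis by (simp add: ln_mult_pos)
qed

context bern
begin

definition mB :: "('a \<Rightarrow> mat2) \<Rightarrow> real" where
  "mB B = O.expectation (\<lambda>x. phi B (x 0))"

lemma expectation_coord0:
  fixes g :: "'a \<Rightarrow> real"
  shows "O.expectation (\<lambda>x. g (x 0)) = (\<Sum>j\<in>UNIV. g j * pmf p j)"
proof -
  have m: "(\<lambda>x. x 0) \<in> measurable \<Omega> (measure_pmf p)"
    unfolding Omega_def by (rule measurable_component_singleton) simp
  have "O.expectation (\<lambda>x. g (x 0)) = integral\<^sup>L (distr \<Omega> (measure_pmf p) (\<lambda>x. x 0)) g"
    by (rule integral_distr[OF m, symmetric]) simp
  also have "distr \<Omega> (measure_pmf p) (\<lambda>x. x 0) = measure_pmf p"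
    unfolding Omega_def by (rule P.PiM_component) simp
  also have "integral\<^sup>L (measure_pmf p) g = (\<Sum>j\<in>UNIV. g j * pmf p j)"
    by (rule integral_measure_pmf_real) (simp_all add: finite_class.finite_UNIV)
  finally show ?thesis .
qed

lemma mB_sum: "mB B = (\<Sum>j\<in>UNIV. phi B j * pmf p j)"
  unfolding mB_def by (rule expectation_coord0)

lemma phi_dep: "(\<And>i. 0 \<le> i \<Longrightarrow> i < int 1 \<Longrightarrow> x i = y i) \<Longrightarrow> phi (B :: 'a \<Rightarrow> mat2) (x 0) = phi B (y 0)"
  by simp

lemma phi_bound: "\<bar>phi (B :: 'a \<Rightarrow> mat2) (x 0)\<bar> \<le> (\<Sum>j\<in>UNIV. \<bar>phi B j\<bar>)"
  by (rule member_le_sum) auto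

lemma Lplus_split:
  assumes B: "B \<in> GL2"
  shows "Lplus p B = Lplus p (normalize_coc B) + mB B"
proof (rule Lplus_eq)
  have NB: "normalize_coc B \<in> GL2" using norm_SL2[OF B] SL2_GL2 by auto
  have a1: "AE x in \<Omega>. (\<lambda>n. ln (mnorm (coc_iter (normalize_coc B) n x)) / real n) \<longlonglongrightarrow> Lplus p (normalize_coc B)"
    by (rule Lplus_AE[OF NB])
  have a2: "AE x in \<Omega>. (\<lambda>n. (\<Sum>j<n. phi B (shift j x 0)) / real n) \<longlonglongrightarrow> mB B"
    unfolding mB_def by (rule slln_block[where m=1, OF _ phi_dep phi_bound]) simp
  show "AE x in \<Omega>. (\<lambda>n. ln (mnorm (coc_iter B n x)) / real n) \<longlonglongrightarrow> Lplus p (normalize_coc B) + mB B"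
    using a1 a2
  proof eventually_elim
    case (elim x)
    have "(\<lambda>n. ln (mnorm (coc_iter (normalize_coc B) n x)) / real n + (\<Sum>j<n. phi B (shift j x 0)) / real n)
            \<longlonglongrightarrow> Lplus p (normalize_coc B) + mB B"
      by (rule tendsto_add[OF elim])
    moreover have "ln (mnorm (coc_iter (normalize_coc B) n x)) / real n + (\<Sum>j<n. phi B (shift j x 0)) / real n
        = ln (mnorm (coc_iter B n x)) / real n" for n
      unfolding f_split[OF B, of n x] by (simp add: add_divide_distrib)
    ultimately show ?case by simp
  qed
qed

end

lemma mnorm_zero: "mnorm 0 = 0"
  using mnorm_scale[of 0 0] by simp

lemma cd_ge: "mnorm (B1 j - B2 j) \<le> coc_dist B1 B2"
  unfolding coc_dist_def by (rule Max_ge) auto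

lemma cd_le: "(\<And>j. mnorm (B1 j - B2 j) \<le> c) \<Longrightarrow> coc_dist B1 B2 \<le> c"
  unfolding coc_dist_def by (subst Max_le_iff) auto

lemma cd_nonneg: "coc_dist B1 B2 \<ge> 0"
  using cd_ge[of B1 undefined B2] mnorm_nonneg by (rule order_trans[rotated])

lemma cd_sym: "coc_dist B1 B2 = coc_dist B2 B1"
  unfolding coc_dist_def by (simp add: mnorm_minus_commute)

lemma cd_tri: "coc_dist B1 B2 \<le> coc_dist B1 A + coc_dist B2 A"
proof (rule cd_le)
  fix j
  have "mnorm (B1 j - B2 j) \<le> mnorm (B1 j - A j) + mnorm (A j - B2 j)" by (rule mnorm_diff_triangle)
  also have "mnorm (A j - B2 j) = mnorm (B2 j - A j)" by (rule mnorm_minus_commute)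
  finally show "mnorm (B1 j - B2 j) \<le> coc_dist B1 A + coc_dist B2 A"
    using cd_ge[of B1 j A] cd_ge[of B2 j A] by linarith
qed

lemma ln_lip:
  fixes u v a :: real
  assumes "a > 0" "u \<ge> a" "v \<ge> a"
  shows "\<bar>ln u - ln v\<bar> \<le> \<bar>u - v\<bar> / a"
proof -
  have h: "ln x - ln y \<le> \<bar>x - y\<bar> / a" if "x \<ge> a" "y \<ge> a" for x y
  proof -
    have xy: "x > 0" "y > 0" using that assms by auto
    have "ln x - ln y = ln (x / y)" using xy by (simp add: ln_div)
    also have "\<dots> \<le> x / y - 1" using xy by (intro ln_le_minus_one) simp
    also have "x / y - 1 = (x - y) / y" using xy by (simp add: field_simps)
    also have "\<dots> \<le> \<bar>x - y\<bar> / y" using xy by (intro divide_right_mono) auto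
    also have "\<dots> \<le> \<bar>x - y\<bar> / a" using xy that assms by (intro divide_left_mono) auto
    finally show ?thesis .
  qed
  show ?thesis using h[OF assms(2,3)] h[OF assms(3,2)] by (simp add: abs_minus_commute abs_le_iff)
qed

lemma inv_sqrt_lip:
  fixes u v a :: real
  assumes a: "a > 0" and uv: "u \<ge> a" "v \<ge> a"
  shows "\<bar>1 / sqrt u - 1 / sqrt v\<bar> \<le> \<bar>u - v\<bar> / (a * sqrt a)"
proof -
  define su sv sa where "su = sqrt u" "sv = sqrt v" "sa = sqrt a"
  have sa0: "sa > 0" using a by (simp add: su_sv_sa_def)
  have su: "su \<ge> sa" "sv \<ge> sa" using uv by (simp_all add: su_sv_sa_def)
  have pos: "su > 0" "sv > 0" using su sa0 by auto
  have sq: "su * su = u" "sv * sv = v" "sa * sa = a" using uv a by (simp_all add: su_sv_sa_def)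
  have eq: "1 / su - 1 / sv = (v - u) / ((su + sv) * su * sv)"
  proof -
    have "(v - u) = (sv - su) * (sv + su)" using sq by (simp add: algebra_simps)
    hence "(v - u) / ((su + sv) * su * sv) = ((sv - su) * (su + sv)) / ((su + sv) * (su * sv))"
      by (simp add: mult.assoc add.commute)
    also have "\<dots> = (sv - su) / (su * sv)" using pos by (simp add: mult.commute)
    also have "\<dots> = 1 / su - 1 / sv" using pos by (simp add: field_simps)
    finally show ?thesis by simp
  qed
  have den: "sa * a \<le> (su + sv) * su * sv"
  proof -
    have "sa \<le> su + sv" using su pos by linarith
    moreover have "a \<le> su * sv" using su sa0 sq(3) by (metis mult_mono less_imp_le order_trans)
    ultimately have "sa * a \<le> (su + sv) * (su * sv)" using sa0 a by (intro mult_mono) auto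
    thus ?thesis by (simp add: mult.assoc)
  qed
  have "\<bar>1 / su - 1 / sv\<bar> = \<bar>u - v\<bar> / ((su + sv) * su * sv)"
    unfolding eq using pos by (simp add: abs_divide abs_minus_commute)
  also have "\<dots> \<le> \<bar>u - v\<bar> / (sa * a)"
  proof -
    have "0 < (su + sv) * su * sv" using pos by simp
    moreover have "0 < sa * a" using sa0 a by simp
    ultimately show ?thesis using den by (intro divide_left_mono) auto
  qed
  finally show ?thesis by (simp add: su_sv_sa_def mult.commute)
qed

lemma local_lip:
  fixes A :: "'a::finite \<Rightarrow> mat2"
  assumes A: "A \<in> GL2"
  obtains \<delta>0 L1 L2 H0 where "\<delta>0 > 0" "L1 \<ge> 0" "L2 \<ge> 0" "H0 \<ge> 0"
    "\<And>B. coc_dist B A < \<delta>0 \<Longrightarrow> B \<in> GL2"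
    "\<And>B1 B2 j. coc_dist B1 A < \<delta>0 \<Longrightarrow> coc_dist B2 A < \<delta>0 \<Longrightarrow> \<bar>phi B1 j - phi B2 j\<bar> \<le> L1 * coc_dist B1 B2"
    "\<And>B1 B2. coc_dist B1 A < \<delta>0 \<Longrightarrow> coc_dist B2 A < \<delta>0 \<Longrightarrow> coc_dist (normalize_coc B1) (normalize_coc B2) \<le> L2 * coc_dist B1 B2"
    "\<And>B j. coc_dist B A < \<delta>0 \<Longrightarrow> \<bar>phi B j\<bar> \<le> H0"
proof -
  define R where "R = (\<Sum>j\<in>UNIV. mnorm (A j)) + 1"
  have RA: "mnorm (A j) \<le> R - 1" for j
    unfolding R_def using member_le_sum[of j UNIV "\<lambda>j. mnorm (A j)"] mnorm_nonneg by auto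
  have R1: "R \<ge> 1" using RA[of undefined] mnorm_nonneg[of "A undefined"] by linarith
  define a0 where "a0 = Min (range (\<lambda>j. \<bar>det (A j)\<bar>))"
  have a0: "a0 > 0" unfolding a0_def using A by (subst Min_gr_iff) (auto simp: GL2_def)
  have a0le: "a0 \<le> \<bar>det (A j)\<bar>" for j unfolding a0_def by (rule Min_le) auto
  define a where "a = a0 / 2"
  have a: "a > 0" using a0 by (simp add: a_def)
  define \<delta>0 where "\<delta>0 = min 1 (a0 / (8 * R))"
  have \<delta>0: "\<delta>0 > 0" using a0 R1 by (simp add: \<delta>0_def)
  have near: "mnorm (B j) \<le> R" "\<bar>det (B j)\<bar> \<ge> a" if B: "coc_dist B A < \<delta>0" for B j
  proof -
    have d: "mnorm (B j - A j) < \<delta>0" using cd_ge[of B j A] B by linarith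
    have "mnorm (B j) \<le> mnorm (A j) + mnorm (B j - A j)" by (rule mnorm_ge_norm_diff)
    also have "\<dots> \<le> R" using RA[of j] d \<delta>0_def by linarith
    finally show R: "mnorm (B j) \<le> R" .
    have "\<bar>det (B j) - det (A j)\<bar> \<le> 4 * R * mnorm (B j - A j)"
      by (rule det2_lip[OF R]) (use RA[of j] in linarith)
    also have "\<dots> \<le> 4 * R * (a0 / (8 * R))"
      using d R1 unfolding \<delta>0_def by (intro mult_left_mono) auto
    also have "\<dots> = a0 / 2" using R1 by (simp add: field_simps)
    finally have "\<bar>det (B j) - det (A j)\<bar> \<le> a0 / 2" .
    thus "\<bar>det (B j)\<bar> \<ge> a" using a0le[of j] unfolding a_def by linarith
  qed
  have GL: "B \<in> GL2" if "coc_dist B A < \<delta>0" for B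
  proof -
    have "det (B j) \<noteq> 0" for j using near(2)[OF that, of j] a by auto
    thus ?thesis unfolding GL2_def by simp
  qed
  define L1 where "L1 = 2 * R / a"
  have L1: "L1 \<ge> 0" using a R1 by (simp add: L1_def)
  have lip1: "\<bar>phi B1 j - phi B2 j\<bar> \<le> L1 * coc_dist B1 B2"
    if B: "coc_dist B1 A < \<delta>0" "coc_dist B2 A < \<delta>0" for B1 B2 j
  proof -
    have "\<bar>phi B1 j - phi B2 j\<bar> = \<bar>ln \<bar>det (B1 j)\<bar> - ln \<bar>det (B2 j)\<bar>\<bar> / 2"
      by (simp add: phi_def ln_sqrt diff_divide_distrib[symmetric])
    also have "\<bar>ln \<bar>det (B1 j)\<bar> - ln \<bar>det (B2 j)\<bar>\<bar> \<le> \<bar>\<bar>det (B1 j)\<bar> - \<bar>det (B2 j)\<bar>\<bar> / a"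
      by (rule ln_lip[OF a near(2)[OF B(1)] near(2)[OF B(2)]])
    also have "\<dots> \<le> \<bar>det (B1 j) - det (B2 j)\<bar> / a"
      using a by (intro divide_right_mono abs_triangle_ineq3) auto
    also have "\<dots> \<le> 4 * R * mnorm (B1 j - B2 j) / a"
      using a by (intro divide_right_mono det2_lip near(1) B) auto
    also have "\<dots> \<le> 4 * R * coc_dist B1 B2 / a"
      using a R1 cd_ge[of B1 j B2] by (intro divide_right_mono mult_left_mono) auto
    finally show ?thesis using a by (simp add: L1_def field_simps)
  qed
  define L2 where "L2 = 1 / sqrt a + 4 * R * R / (a * sqrt a)"
  have L2: "L2 \<ge> 0" using a R1 by (simp add: L2_def)
  have lip2: "coc_dist (normalize_coc B1) (normalize_coc B2) \<le> L2 * coc_dist B1 B2"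
    if B: "coc_dist B1 A < \<delta>0" "coc_dist B2 A < \<delta>0" for B1 B2
  proof (rule cd_le)
    fix j
    define t1 t2 where "t1 = 1 / sqrt \<bar>det (B1 j)\<bar>" "t2 = 1 / sqrt \<bar>det (B2 j)\<bar>"
    define d where "d = coc_dist B1 B2"
    have d0: "d \<ge> 0" unfolding d_def by (rule cd_nonneg)
    have eq: "normalize_coc B1 j - normalize_coc B2 j = t1 *\<^sub>R (B1 j - B2 j) + (t1 - t2) *\<^sub>R B2 j"
      by (simp add: normalize_coc_def t1_t2_def algebra_simps)
    have t1: "\<bar>t1\<bar> \<le> 1 / sqrt a"
      using near(2)[OF B(1), of j] a unfolding t1_t2_def by (simp add: frac_le)
    have t12: "\<bar>t1 - t2\<bar> \<le> 4 * R * d / (a * sqrt a)"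
    proof -
      have "\<bar>t1 - t2\<bar> \<le> \<bar>\<bar>det (B1 j)\<bar> - \<bar>det (B2 j)\<bar>\<bar> / (a * sqrt a)"
        unfolding t1_t2_def by (rule inv_sqrt_lip[OF a near(2)[OF B(1)] near(2)[OF B(2)]])
      also have "\<dots> \<le> \<bar>det (B1 j) - det (B2 j)\<bar> / (a * sqrt a)"
        using a by (intro divide_right_mono abs_triangle_ineq3) auto
      also have "\<dots> \<le> 4 * R * mnorm (B1 j - B2 j) / (a * sqrt a)"
        using a by (intro divide_right_mono det2_lip near(1) B) auto
      also have "\<dots> \<le> 4 * R * d / (a * sqrt a)"
        using a R1 cd_ge[of B1 j B2] unfolding d_def by (intro divide_right_mono mult_left_mono) auto
      finally show ?thesis .
    qed
    have "mnorm (normalize_coc B1 j - normalize_coc B2 j) \<le> mnorm (t1 *\<^sub>R (B1 j - B2 j)) + mnorm ((t1 - t2) *\<^sub>R B2 j)"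
      unfolding eq by (rule mnorm_triangle)
    also have "\<dots> = \<bar>t1\<bar> * mnorm (B1 j - B2 j) + \<bar>t1 - t2\<bar> * mnorm (B2 j)" by (simp add: mnorm_scale)
    also have "\<dots> \<le> (1 / sqrt a) * d + (4 * R * d / (a * sqrt a)) * R"
    proof (intro add_mono mult_mono t1 t12)
      show "mnorm (B1 j - B2 j) \<le> d" unfolding d_def by (rule cd_ge)
      show "mnorm (B2 j) \<le> R" by (rule near(1)[OF B(2)])
    qed (use a d0 R1 mnorm_nonneg in auto)
    also have "\<dots> = L2 * d" by (simp add: L2_def algebra_simps)
    finally show "mnorm (normalize_coc B1 j - normalize_coc B2 j) \<le> L2 * coc_dist B1 B2" by (simp add: d_def)
  qed
  define H0 where "H0 = (\<Sum>j\<in>UNIV. \<bar>phi A j\<bar>) + L1 * \<delta>0"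
  have H0: "H0 \<ge> 0" using L1 \<delta>0 by (simp add: H0_def sum_nonneg)
  have hb: "\<bar>phi B j\<bar> \<le> H0" if B: "coc_dist B A < \<delta>0" for B j
  proof -
    have A0: "coc_dist A A < \<delta>0" using \<delta>0 by (simp add: coc_dist_def mnorm_zero)
    have "\<bar>phi B j - phi A j\<bar> \<le> L1 * coc_dist B A" by (rule lip1[OF B A0])
    also have "\<dots> \<le> L1 * \<delta>0" using B L1 by (intro mult_left_mono) auto
    finally have "\<bar>phi B j - phi A j\<bar> \<le> L1 * \<delta>0" .
    moreover have "\<bar>phi A j\<bar> \<le> (\<Sum>j\<in>UNIV. \<bar>phi A j\<bar>)" by (rule member_le_sum) auto
    ultimately show ?thesis unfolding H0_def by linarith
  qed
  show ?thesis using that[OF \<delta>0 L1 L2 H0 GL lip1 lip2 hb] by blast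
qed


lemma powr_eventually_ge:
  assumes t: "t > 0"
  shows "\<exists>N::nat. \<forall>n\<ge>N. real n powr t \<ge> K"
proof -
  define y where "y = max 1 K powr (1/t)"
  obtain N :: nat where N: "y \<le> real N" using real_arch_simple by blast
  have "real n powr t \<ge> K" if "n \<ge> N" for n
  proof -
    have y0: "y \<ge> 0" by (simp add: y_def)
    have "y \<le> real n" using N that by linarith
    hence "y powr t \<le> real n powr t" using y0 t by (intro powr_mono2) auto
    moreover have "y powr t = max 1 K" unfolding y_def using t by (simp add: powr_powr)
    ultimately show ?thesis by linarith
  qed
  thus ?thesis by blast
qed

lemma split_dev:
  fixes X Y Z :: real
  assumes "X = Y + Z" "t1 + t2 \<le> t" "t < \<bar>X\<bar>"
  shows "t1 < \<bar>Y\<bar> \<or> t2 \<le> \<bar>Z\<bar>"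
  using assms by linarith

context bern
begin

lemma hoeff_phi:
  assumes H: "\<And>j. \<bar>phi B j\<bar> \<le> H" and eps: "\<epsilon> \<ge> 0" and K: "K > 0"
  shows "O.prob {x \<in> space \<Omega>. \<epsilon> \<le> \<bar>(\<Sum>k<K. phi B (x (int k))) / real K - mB B\<bar>}
           \<le> 2 * exp (- (real K * \<epsilon>\<^sup>2 / (2 * (H+1)\<^sup>2)))"
proof -
  have "O.prob {x \<in> space \<Omega>. \<epsilon> \<le> \<bar>(\<Sum>k\<in>{..<K}. phi B (shift (k*1 + 0) x 0)) / real (card {..<K}) - O.expectation (\<lambda>x. phi B (x 0))\<bar>}
           \<le> 2 * exp (-2 * real (card {..<K}) * \<epsilon>\<^sup>2 / ((H+1) - (-H-1))\<^sup>2)"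
    by (rule hoeffding_block[where m=1, OF _ phi_dep _ eps K]) (use H in auto)
  moreover have "-2 * real (card {..<K}) * \<epsilon>\<^sup>2 / ((H+1) - (-H-1))\<^sup>2 = - (real K * \<epsilon>\<^sup>2 / (2 * (H+1)\<^sup>2))"
  proof -
    have e1: "((H+1) - (-H-1))\<^sup>2 = 4 * (H+1)\<^sup>2" by (simp add: power2_eq_square algebra_simps)
    have e2: "-2 * k * e / (4 * h) = - (k * e / (2 * h))" for k e h :: real
      by (cases "h = 0") (simp_all add: field_simps)
    show ?thesis unfolding e1 card_lessThan by (rule e2)
  qed
  ultimately show ?thesis by (simp add: mB_def)
qed

lemma prob_split:
  assumes B: "B \<in> GL2" and n: "n > 0" and t: "t1 + t2 \<le> t"
  shows "O.prob {x \<in> space \<Omega>. \<bar>ln (mnorm (coc_iter B n x)) / real n - Lplus p B\<bar> > t}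
     \<le> O.prob {x \<in> space \<Omega>. \<bar>ln (mnorm (coc_iter (normalize_coc B) n x)) / real n - Lplus p (normalize_coc B)\<bar> > t1}
      + O.prob {x \<in> space \<Omega>. t2 \<le> \<bar>(\<Sum>k<n. phi B (x (int k))) / real n - mB B\<bar>}"
proof -
  let ?S = "{x \<in> space \<Omega>. \<bar>ln (mnorm (coc_iter B n x)) / real n - Lplus p B\<bar> > t}"
  let ?S1 = "{x \<in> space \<Omega>. \<bar>ln (mnorm (coc_iter (normalize_coc B) n x)) / real n - Lplus p (normalize_coc B)\<bar> > t1}"
  let ?S2 = "{x \<in> space \<Omega>. t2 \<le> \<bar>(\<Sum>k<n. phi B (x (int k))) / real n - mB B\<bar>}"
  have S1': "{x. \<bar>ln (mnorm (coc_iter (normalize_coc B) n x)) / real n - Lplus p (normalize_coc B)\<bar> > t1} \<in> sets \<Omega>"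
  proof (rule sets_dep[of "{0..<int n}"])
    fix x y :: "int \<Rightarrow> 'a" assume xy: "\<And>i. i \<in> {0..<int n} \<Longrightarrow> x i = y i"
    have "coc_iter (normalize_coc B) n x = coc_iter (normalize_coc B) n y" by (rule coc_dep) (use xy in auto)
    thus "(\<bar>ln (mnorm (coc_iter (normalize_coc B) n x)) / real n - Lplus p (normalize_coc B)\<bar> > t1) =
          (\<bar>ln (mnorm (coc_iter (normalize_coc B) n y)) / real n - Lplus p (normalize_coc B)\<bar> > t1)" by simp
  qed simp
  have S1: "?S1 \<in> sets \<Omega>" using S1' by simp
  have S2': "{x. t2 \<le> \<bar>(\<Sum>k<n. phi B (x (int k))) / real n - mB B\<bar>} \<in> sets \<Omega>"
  proof (rule sets_dep[of "{0..<int n}"])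
    fix x y :: "int \<Rightarrow> 'a" assume xy: "\<And>i. i \<in> {0..<int n} \<Longrightarrow> x i = y i"
    have "(\<Sum>k<n. phi B (x (int k))) = (\<Sum>k<n. phi B (y (int k)))" by (rule sum.cong) (use xy in auto)
    thus "(t2 \<le> \<bar>(\<Sum>k<n. phi B (x (int k))) / real n - mB B\<bar>) = (t2 \<le> \<bar>(\<Sum>k<n. phi B (y (int k))) / real n - mB B\<bar>)"
      by simp
  qed simp
  have S2: "?S2 \<in> sets \<Omega>" using S2' by simp
  have sub: "?S \<subseteq> ?S1 \<union> ?S2"
  proof
    fix x assume x: "x \<in> ?S"
    have eq: "ln (mnorm (coc_iter B n x)) / real n - Lplus p B
       = (ln (mnorm (coc_iter (normalize_coc B) n x)) / real n - Lplus p (normalize_coc B))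
         + ((\<Sum>k<n. phi B (x (int k))) / real n - mB B)"
      unfolding f_split[OF B, of n x] Lplus_split[OF B] by (simp add: add_divide_distrib)
    have "t < \<bar>ln (mnorm (coc_iter B n x)) / real n - Lplus p B\<bar>" using x by simp
    from split_dev[OF eq t this] show "x \<in> ?S1 \<union> ?S2" by simp
  qed
  have "O.prob ?S \<le> O.prob (?S1 \<union> ?S2)"
    using sub S1 S2 by (intro O.finite_measure_mono) auto
  also have "\<dots> \<le> O.prob ?S1 + O.prob ?S2" by (rule measure_Un_le[OF S1 S2])
  finally show ?thesis .
qed

end

lemma exp_three:
  fixes c X :: real
  assumes "c * X > ln 3" "P1 < exp (- (2 * c * X))" "P2 \<le> 2 * exp (- (2 * c * X))"
  shows "P1 + P2 < exp (- c * X)"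
proof -
  have "exp (c * X) > 3" using assms(1) by (metis exp_less_cancel_iff exp_ln zero_less_numeral)
  hence "3 * exp (- (2 * c * X)) < exp (c * X) * exp (- (2 * c * X))" by simp
  also have "exp (c * X) * exp (- (2 * c * X)) = exp (- c * X)" by (simp add: exp_add[symmetric])
  finally show ?thesis using assms(2,3) by linarith
qed

context bern
begin

lemma close_norm:
  assumes "\<delta>0 > 0" "L2 \<ge> 0"
    and GL: "\<And>B. coc_dist B A < \<delta>0 \<Longrightarrow> B \<in> GL2"
    and lip2: "\<And>B1 B2. coc_dist B1 A < \<delta>0 \<Longrightarrow> coc_dist B2 A < \<delta>0 \<Longrightarrow> coc_dist (normalize_coc B1) (normalize_coc B2) \<le> L2 * coc_dist B1 B2"
    and B: "coc_dist B A < min \<delta>0 (\<delta>s / (L2 + 1))"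
  shows "B \<in> GL2" "normalize_coc B \<in> SL2" "coc_dist (normalize_coc B) (normalize_coc A) < \<delta>s"
proof -
  show GB: "B \<in> GL2" using GL B by simp
  show "normalize_coc B \<in> SL2" by (rule norm_SL2[OF GB])
  have A0: "coc_dist A A < \<delta>0" using assms(1) by (simp add: coc_dist_def mnorm_zero)
  have "coc_dist (normalize_coc B) (normalize_coc A) \<le> L2 * coc_dist B A"
    using lip2[OF _ A0, of B] B by simp
  also have "\<dots> \<le> (L2 + 1) * coc_dist B A" using cd_nonneg[of B A] by (simp add: algebra_simps)
  also have "\<dots> < (L2 + 1) * (\<delta>s / (L2 + 1))" using B assms(2) by (intro mult_strict_left_mono) auto
  also have "\<dots> = \<delta>s" using assms(2) by simp
  finally show "coc_dist (normalize_coc B) (normalize_coc A) < \<delta>s" .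
qed

lemma part_exp:
  assumes A: "A \<in> GL2" and hyp: "uniform_exp_LDT p SL2 (normalize_coc A)"
  shows "uniform_exp_LDT p GL2 A"
proof -
  obtain \<delta>0 L1 L2 H0 where \<delta>0: "\<delta>0 > 0" and L2: "L2 \<ge> 0" and H0: "H0 \<ge> 0"
    and GL: "\<And>B. coc_dist B A < \<delta>0 \<Longrightarrow> B \<in> GL2"
    and lip2: "\<And>B1 B2. coc_dist B1 A < \<delta>0 \<Longrightarrow> coc_dist B2 A < \<delta>0 \<Longrightarrow> coc_dist (normalize_coc B1) (normalize_coc B2) \<le> L2 * coc_dist B1 B2"
    and hb: "\<And>B j. coc_dist B A < \<delta>0 \<Longrightarrow> \<bar>phi B j\<bar> \<le> H0"
    using local_lip[OF A] by metis
  from hyp obtain \<delta>s cs \<epsilon>0s where \<delta>s: "\<delta>s > 0" and cs: "cs > 0" and \<epsilon>0s: "\<epsilon>0s > 0"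
    and Hy: "\<And>\<epsilon>. 0 < \<epsilon> \<Longrightarrow> \<epsilon> < \<epsilon>0s \<Longrightarrow> (\<exists>nbar. \<forall>B\<in>SL2. coc_dist B (normalize_coc A) < \<delta>s \<longrightarrow> (\<forall>n\<ge>nbar.
         measure (bernoulli p) {x \<in> space (bernoulli p).
             \<bar>ln (mnorm (coc_iter B n x)) / real n - Lplus p B\<bar> > \<epsilon>}
           < exp (- cs * \<epsilon>\<^sup>2 * real n)))"
    unfolding uniform_exp_LDT_def by blast
  define \<delta> where "\<delta> = min \<delta>0 (\<delta>s / (L2 + 1))"
  have \<delta>: "\<delta> > 0" using \<delta>0 \<delta>s L2 by (simp add: \<delta>_def)
  define \<kappa> where "\<kappa> = 1 / (8 * (H0 + 1)\<^sup>2)"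
  have \<kappa>: "\<kappa> > 0" using H0 by (simp add: \<kappa>_def)
  define c where "c = min (cs / 4) \<kappa> / 2"
  have c: "c > 0" using cs \<kappa> by (simp add: c_def)
  have c1: "2 * c \<le> cs / 4" "2 * c \<le> \<kappa>" by (simp_all add: c_def)
  show ?thesis unfolding uniform_exp_LDT_def
  proof (rule exI[of _ \<delta>], rule conjI[OF \<delta>], rule exI[of _ c], rule conjI[OF c],
         rule exI[of _ \<epsilon>0s], rule conjI[OF \<epsilon>0s], intro allI impI)
    fix \<epsilon> :: real assume \<epsilon>: "0 < \<epsilon> \<and> \<epsilon> < \<epsilon>0s"
    obtain nb1 where nb1: "\<forall>B\<in>SL2. coc_dist B (normalize_coc A) < \<delta>s \<longrightarrow> (\<forall>n\<ge>nb1.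
         measure (bernoulli p) {x \<in> space (bernoulli p).
             \<bar>ln (mnorm (coc_iter B n x)) / real n - Lplus p B\<bar> > \<epsilon>/2}
           < exp (- cs * (\<epsilon>/2)\<^sup>2 * real n))"
      using Hy[of "\<epsilon>/2"] \<epsilon> by auto
    obtain N3 :: nat where N3: "ln 3 / (c * \<epsilon>\<^sup>2) < real N3" using reals_Archimedean2 by blast
    show "\<exists>nbar. \<forall>B\<in>GL2. coc_dist B A < \<delta> \<longrightarrow> (\<forall>n\<ge>nbar.
         measure (bernoulli p) {x \<in> space (bernoulli p).
             \<bar>ln (mnorm (coc_iter B n x)) / real n - Lplus p B\<bar> > \<epsilon>}
           < exp (- c * \<epsilon>\<^sup>2 * real n))"
    proof (intro exI[of _ "max (max nb1 1) N3"] ballI impI allI)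
      fix B n assume GB: "B \<in> GL2" and dB: "coc_dist B A < \<delta>" and n: "max (max nb1 1) N3 \<le> n"
      have cl: "normalize_coc B \<in> SL2" "coc_dist (normalize_coc B) (normalize_coc A) < \<delta>s"
        using close_norm[where B=B and \<delta>s=\<delta>s, OF \<delta>0 L2 GL lip2] dB unfolding \<delta>_def by auto
      have n0: "n > 0" using n by simp
      have dB0: "coc_dist B A < \<delta>0" using dB by (simp add: \<delta>_def)
      define X where "X = \<epsilon>\<^sup>2 * real n"
      have X0: "X \<ge> 0" by (simp add: X_def)
      have P1: "O.prob {x \<in> space \<Omega>. \<bar>ln (mnorm (coc_iter (normalize_coc B) n x)) / real n - Lplus p (normalize_coc B)\<bar> > \<epsilon>/2}
          < exp (- (2 * c * X))"
      proof -
        have "O.prob {x \<in> space \<Omega>. \<bar>ln (mnorm (coc_iter (normalize_coc B) n x)) / real n - Lplus p (normalize_coc B)\<bar> > \<epsilon>/2}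
            < exp (- cs * (\<epsilon>/2)\<^sup>2 * real n)" using nb1 cl n by auto
        also have "- cs * (\<epsilon>/2)\<^sup>2 * real n = - ((cs/4) * X)" by (simp add: X_def power_divide algebra_simps)
        also have "exp (- ((cs/4) * X)) \<le> exp (- (2 * c * X))"
        proof -
          have "2 * c * X \<le> (cs/4) * X" using c1(1) X0 by (rule mult_right_mono)
          thus ?thesis by simp
        qed
        finally show ?thesis .
      qed
      have P2: "O.prob {x \<in> space \<Omega>. \<epsilon>/2 \<le> \<bar>(\<Sum>k<n. phi B (x (int k))) / real n - mB B\<bar>}
          \<le> 2 * exp (- (2 * c * X))"
      proof -
        have "O.prob {x \<in> space \<Omega>. \<epsilon>/2 \<le> \<bar>(\<Sum>k<n. phi B (x (int k))) / real n - mB B\<bar>}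
            \<le> 2 * exp (- (real n * (\<epsilon>/2)\<^sup>2 / (2 * (H0+1)\<^sup>2)))"
          by (rule hoeff_phi[OF hb[OF dB0]]) (use \<epsilon> n0 in auto)
        also have "real n * (\<epsilon>/2)\<^sup>2 / (2 * (H0+1)\<^sup>2) = \<kappa> * X"
          by (simp add: \<kappa>_def X_def power_divide field_simps)
        also have "exp (- (\<kappa> * X)) \<le> exp (- (2 * c * X))"
        proof -
          have "2 * c * X \<le> \<kappa> * X" using c1(2) X0 by (rule mult_right_mono)
          thus ?thesis by simp
        qed
        finally show ?thesis by simp
      qed
      have cX: "c * X > ln 3"
      proof -
        have "ln 3 / (c * \<epsilon>\<^sup>2) < real n" using N3 n by linarith
        moreover have "c * \<epsilon>\<^sup>2 > 0" using c \<epsilon> by simp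
        ultimately have "ln 3 < real n * (c * \<epsilon>\<^sup>2)" by (simp add: divide_less_eq)
        thus ?thesis by (simp add: X_def algebra_simps)
      qed
      have "O.prob {x \<in> space \<Omega>. \<bar>ln (mnorm (coc_iter B n x)) / real n - Lplus p B\<bar> > \<epsilon>}
         \<le> O.prob {x \<in> space \<Omega>. \<bar>ln (mnorm (coc_iter (normalize_coc B) n x)) / real n - Lplus p (normalize_coc B)\<bar> > \<epsilon>/2}
          + O.prob {x \<in> space \<Omega>. \<epsilon>/2 \<le> \<bar>(\<Sum>k<n. phi B (x (int k))) / real n - mB B\<bar>}"
        by (rule prob_split[OF GB n0]) simp
      also have "\<dots> < exp (- c * X)" by (rule exp_three[OF cX P1 P2])
      finally show "measure (bernoulli p) {x \<in> space (bernoulli p).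
             \<bar>ln (mnorm (coc_iter B n x)) / real n - Lplus p B\<bar> > \<epsilon>} < exp (- c * \<epsilon>\<^sup>2 * real n)"
        by (simp add: X_def mult.assoc)
    qed
  qed
qed

end

context bern
begin

lemma dev_sets:
  "{x \<in> space \<Omega>. \<bar>ln (mnorm (coc_iter C n x)) / real n - L\<bar> > t} \<in> sets \<Omega>"
proof -
  have "{x. \<bar>ln (mnorm (coc_iter C n x)) / real n - L\<bar> > t} \<in> sets \<Omega>"
  proof (rule sets_dep[of "{0..<int n}"])
    fix x y :: "int \<Rightarrow> 'a" assume xy: "\<And>i. i \<in> {0..<int n} \<Longrightarrow> x i = y i"
    have "coc_iter C n x = coc_iter C n y" by (rule coc_dep) (use xy in auto)
    thus "(\<bar>ln (mnorm (coc_iter C n x)) / real n - L\<bar> > t) = (\<bar>ln (mnorm (coc_iter C n y)) / real n - L\<bar> > t)"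
      by simp
  qed simp
  thus ?thesis by simp
qed

lemma part_subexp:
  assumes A: "A \<in> GL2" and hyp: "uniform_subexp_LDT p SL2 (normalize_coc A)"
  shows "uniform_subexp_LDT p GL2 A"
proof -
  obtain \<delta>0 L1 L2 H0 where \<delta>0: "\<delta>0 > 0" and L2: "L2 \<ge> 0" and H0: "H0 \<ge> 0"
    and GL: "\<And>B. coc_dist B A < \<delta>0 \<Longrightarrow> B \<in> GL2"
    and lip2: "\<And>B1 B2. coc_dist B1 A < \<delta>0 \<Longrightarrow> coc_dist B2 A < \<delta>0 \<Longrightarrow> coc_dist (normalize_coc B1) (normalize_coc B2) \<le> L2 * coc_dist B1 B2"
    and hb: "\<And>B j. coc_dist B A < \<delta>0 \<Longrightarrow> \<bar>phi B j\<bar> \<le> H0"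
    using local_lip[OF A] by metis
  from hyp obtain \<delta>s nbs as bs where \<delta>s: "\<delta>s > 0" and as: "as > 0" and bs: "bs > 0"
    and Hy: "\<And>B n. B \<in> SL2 \<Longrightarrow> coc_dist B (normalize_coc A) < \<delta>s \<Longrightarrow> n \<ge> nbs \<Longrightarrow>
         measure (bernoulli p) {x \<in> space (bernoulli p).
             \<bar>ln (mnorm (coc_iter B n x)) / real n - Lplus p B\<bar> > real n powr (- as)}
           < exp (- (real n powr bs))"
    unfolding uniform_subexp_LDT_def by blast
  define \<delta> where "\<delta> = min \<delta>0 (\<delta>s / (L2 + 1))"
  have \<delta>: "\<delta> > 0" using \<delta>0 \<delta>s L2 by (simp add: \<delta>_def)
  define \<kappa> where "\<kappa> = 1 / (8 * (H0 + 1)\<^sup>2)"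
  have \<kappa>: "\<kappa> > 0" using H0 by (simp add: \<kappa>_def)
  define a where "a = min (as/2) (1/4)"
  define b where "b = min (bs/2) (1/4)"
  have a: "a > 0" "a \<le> 1/4" "as - a > 0" using as by (auto simp: a_def)
  have b: "b > 0" "b \<le> 1/4" "bs - b > 0" using bs by (auto simp: b_def)
  have e3: "1 - 2*a - b > 0" using a b by linarith
  obtain N1 where N1: "\<And>n. n \<ge> N1 \<Longrightarrow> real n powr (as - a) \<ge> 2" using powr_eventually_ge[OF a(3)] by blast
  obtain N2 where N2: "\<And>n. n \<ge> N2 \<Longrightarrow> real n powr (bs - b) \<ge> 2" using powr_eventually_ge[OF b(3)] by blast
  obtain N3 where N3: "\<And>n. n \<ge> N3 \<Longrightarrow> real n powr b \<ge> 3" using powr_eventually_ge[OF b(1)] by blast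
  obtain N4 where N4: "\<And>n. n \<ge> N4 \<Longrightarrow> real n powr (1 - 2*a - b) \<ge> 2 / \<kappa>" using powr_eventually_ge[OF e3] by blast
  have ln2: "ln (2::real) \<le> 3" "ln (4::real) \<le> 3" using ln_le_minus_one[of 2] ln_le_minus_one[of 4] by simp_all
  show ?thesis unfolding uniform_subexp_LDT_def
  proof (rule exI[of _ \<delta>], rule conjI[OF \<delta>], rule exI[of _ "max (max (max N1 N2) (max N3 N4)) (max nbs 1)"],
         rule exI[of _ a], rule conjI[OF a(1)], rule exI[of _ b], rule conjI[OF b(1)], intro ballI impI allI)
    fix B n assume GB: "B \<in> GL2" and dB: "coc_dist B A < \<delta>" and n: "max (max (max N1 N2) (max N3 N4)) (max nbs 1) \<le> n"
    have cl: "normalize_coc B \<in> SL2" "coc_dist (normalize_coc B) (normalize_coc A) < \<delta>s"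
      using close_norm[where B=B and \<delta>s=\<delta>s, OF \<delta>0 L2 GL lip2] dB unfolding \<delta>_def by auto
    have n0: "n > 0" using n by simp
    have rn: "real n > 0" using n0 by simp
    have dB0: "coc_dist B A < \<delta>0" using dB by (simp add: \<delta>_def)
    define t where "t = real n powr (- a)"
    define Y where "Y = real n powr b"
    have t0: "t > 0" using rn by (simp add: t_def)
    have th1: "real n powr (- as) \<le> t / 2"
    proof -
      have "t = real n powr (as - a) * real n powr (- as)" unfolding t_def by (simp add: powr_add[symmetric])
      moreover have "real n powr (as - a) \<ge> 2" using N1 n by simp
      moreover have "real n powr (- as) > 0" using rn by simp
      ultimately have "2 * real n powr (- as) \<le> t" by (simp add: mult_right_mono)
      thus ?thesis by simp
    qed
    have P1: "O.prob {x \<in> space \<Omega>. \<bar>ln (mnorm (coc_iter (normalize_coc B) n x)) / real n - Lplus p (normalize_coc B)\<bar> > t/2}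
        < exp (- Y) / 2"
    proof -
      have "O.prob {x \<in> space \<Omega>. \<bar>ln (mnorm (coc_iter (normalize_coc B) n x)) / real n - Lplus p (normalize_coc B)\<bar> > t/2}
          \<le> O.prob {x \<in> space \<Omega>. \<bar>ln (mnorm (coc_iter (normalize_coc B) n x)) / real n - Lplus p (normalize_coc B)\<bar> > real n powr (- as)}"
        using th1 by (intro O.finite_measure_mono dev_sets) auto
      also have "\<dots> < exp (- (real n powr bs))" using Hy[OF cl] n by simp
      also have "exp (- (real n powr bs)) \<le> exp (- Y) / 2"
      proof -
        have "real n powr bs = real n powr (bs - b) * Y" unfolding Y_def by (simp add: powr_add[symmetric])
        moreover have "real n powr (bs - b) \<ge> 2" using N2 n by simp
        moreover have "Y \<ge> 3" using N3 n by (simp add: Y_def)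
        ultimately have "2 * Y \<le> real n powr bs" by (simp add: mult_right_mono)
        hence "real n powr bs \<ge> Y + ln 2" using ln2 \<open>Y \<ge> 3\<close> by linarith
        hence "exp (- (real n powr bs)) \<le> exp (- Y - ln 2)" by simp
        also have "exp (- Y - ln 2) = exp (- Y) / 2" by (simp add: exp_diff)
        finally show ?thesis .
      qed
      finally show ?thesis .
    qed
    have P2: "O.prob {x \<in> space \<Omega>. t/2 \<le> \<bar>(\<Sum>k<n. phi B (x (int k))) / real n - mB B\<bar>} \<le> exp (- Y) / 2"
    proof -
      have "O.prob {x \<in> space \<Omega>. t/2 \<le> \<bar>(\<Sum>k<n. phi B (x (int k))) / real n - mB B\<bar>}
          \<le> 2 * exp (- (real n * (t/2)\<^sup>2 / (2 * (H0+1)\<^sup>2)))"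
        by (rule hoeff_phi[OF hb[OF dB0]]) (use t0 n0 in auto)
      also have "real n * (t/2)\<^sup>2 / (2 * (H0+1)\<^sup>2) = \<kappa> * (real n * t\<^sup>2)"
        by (simp add: \<kappa>_def power_divide field_simps)
      also have "real n * t\<^sup>2 = real n powr (1 - 2*a - b) * Y"
      proof -
        have "real n * t\<^sup>2 = real n powr 1 * real n powr (-a) * real n powr (-a)"
          using rn by (simp add: t_def power2_eq_square)
        also have "\<dots> = real n powr (1 + -a + -a)" by (simp only: powr_add)
        also have "(1 + -a + -a) = (1 - 2*a - b) + b" by simp
        also have "real n powr ((1 - 2*a - b) + b) = real n powr (1 - 2*a - b) * real n powr b"
          by (simp only: powr_add)
        finally show ?thesis by (simp add: Y_def)
      qed
      also have "2 * exp (- (\<kappa> * (real n powr (1 - 2*a - b) * Y))) \<le> exp (- Y) / 2"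
      proof -
        have "real n powr (1 - 2*a - b) \<ge> 2 / \<kappa>" using N4 n by simp
        moreover have "Y \<ge> 3" using N3 n by (simp add: Y_def)
        ultimately have "real n powr (1 - 2*a - b) * Y \<ge> (2 / \<kappa>) * Y" by (intro mult_right_mono) auto
        hence "\<kappa> * (real n powr (1 - 2*a - b) * Y) \<ge> \<kappa> * ((2 / \<kappa>) * Y)" using \<kappa> by (intro mult_left_mono) auto
        also have "\<kappa> * ((2 / \<kappa>) * Y) = 2 * Y" using \<kappa> by simp
        finally have "\<kappa> * (real n powr (1 - 2*a - b) * Y) \<ge> Y + ln 4" using ln2 \<open>Y \<ge> 3\<close> by linarith
        hence "exp (- (\<kappa> * (real n powr (1 - 2*a - b) * Y))) \<le> exp (- Y - ln 4)" by simp
        also have "exp (- Y - ln 4) = exp (- Y) / 4" by (simp add: exp_diff)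
        finally show ?thesis by simp
      qed
      finally show ?thesis .
    qed
    have "O.prob {x \<in> space \<Omega>. \<bar>ln (mnorm (coc_iter B n x)) / real n - Lplus p B\<bar> > t}
       \<le> O.prob {x \<in> space \<Omega>. \<bar>ln (mnorm (coc_iter (normalize_coc B) n x)) / real n - Lplus p (normalize_coc B)\<bar> > t/2}
        + O.prob {x \<in> space \<Omega>. t/2 \<le> \<bar>(\<Sum>k<n. phi B (x (int k))) / real n - mB B\<bar>}"
      by (rule prob_split[OF GB n0]) simp
    also have "\<dots> < exp (- Y)" using P1 P2 by linarith
    finally show "measure (bernoulli p) {x \<in> space (bernoulli p).
             \<bar>ln (mnorm (coc_iter B n x)) / real n - Lplus p B\<bar> > real n powr (- a)}
           < exp (- (real n powr b))" by (simp add: t_def Y_def)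
  qed
qed

end

context bern
begin

lemma mB_lip:
  assumes "\<And>j. \<bar>phi B1 j - phi B2 j\<bar> \<le> K"
  shows "\<bar>mB B1 - mB B2\<bar> \<le> K"
proof -
  have "mB B1 - mB B2 = (\<Sum>j\<in>UNIV. (phi B1 j - phi B2 j) * pmf p j)"
    unfolding mB_sum by (simp add: sum_subtractf left_diff_distrib)
  also have "\<bar>\<dots>\<bar> \<le> (\<Sum>j\<in>UNIV. \<bar>(phi B1 j - phi B2 j) * pmf p j\<bar>)" by (rule sum_abs)
  also have "\<dots> \<le> (\<Sum>j\<in>UNIV. K * pmf p j)"
    by (rule sum_mono) (use assms in \<open>auto simp: abs_mult intro!: mult_right_mono\<close>)
  also have "\<dots> = K * (\<Sum>j\<in>UNIV. pmf p j)" by (simp add: sum_distrib_left)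
  also have "(\<Sum>j\<in>UNIV. pmf p j) = 1" by (rule sum_pmf_eq_1) auto
  finally show ?thesis by simp
qed

lemma part_mod:
  assumes A: "A \<in> GL2" and adm: "admissible_modulus \<omega>"
    and hyp: "has_modulus_near (Lplus p) SL2 \<omega> (normalize_coc A)"
  shows "has_modulus_near (Lplus p) GL2 \<omega> A"
proof -
  obtain \<delta>0 L1 L2 H0 where \<delta>0: "\<delta>0 > 0" and L1: "L1 \<ge> 0" and L2: "L2 \<ge> 0"
    and GL: "\<And>B. coc_dist B A < \<delta>0 \<Longrightarrow> B \<in> GL2"
    and lip1: "\<And>B1 B2 j. coc_dist B1 A < \<delta>0 \<Longrightarrow> coc_dist B2 A < \<delta>0 \<Longrightarrow> \<bar>phi B1 j - phi B2 j\<bar> \<le> L1 * coc_dist B1 B2"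
    and lip2: "\<And>B1 B2. coc_dist B1 A < \<delta>0 \<Longrightarrow> coc_dist B2 A < \<delta>0 \<Longrightarrow> coc_dist (normalize_coc B1) (normalize_coc B2) \<le> L2 * coc_dist B1 B2"
    using local_lip[OF A] by metis
  from adm obtain c t0 where mono: "mono_on {0..} \<omega>" and c: "c > 0" and t0: "t0 > 0"
    and low: "\<And>t. 0 \<le> t \<Longrightarrow> t \<le> t0 \<Longrightarrow> c * t \<le> \<omega> t"
    unfolding admissible_modulus_def by blast
  from hyp obtain \<delta>s Cs where \<delta>s: "\<delta>s > 0" and Cs: "Cs > 0"
    and Hy: "\<And>B1 B2. B1 \<in> SL2 \<Longrightarrow> B2 \<in> SL2 \<Longrightarrow> coc_dist B1 (normalize_coc A) < \<delta>s \<Longrightarrow> coc_dist B2 (normalize_coc A) < \<delta>s \<Longrightarrow>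
       \<bar>Lplus p B1 - Lplus p B2\<bar> \<le> Cs * \<omega> (Cs * coc_dist B1 B2)"
    unfolding has_modulus_near_def by blast
  define C where "C = Cs + 1 + Cs * L2 + L1 / c"
  have C1: "C \<ge> Cs + 1" "C \<ge> Cs * L2" "C \<ge> L1 / c" using Cs L1 L2 c by (simp_all add: C_def)
  have C0: "C > 0" using C1 Cs by linarith
  define \<delta> where "\<delta> = min (min \<delta>0 (\<delta>s / (L2 + 1))) (t0 / (2 * C))"
  have \<delta>: "\<delta> > 0" using \<delta>0 \<delta>s L2 t0 C0 by (simp add: \<delta>_def)
  show ?thesis unfolding has_modulus_near_def
  proof (rule exI[of _ \<delta>], rule conjI[OF \<delta>], rule exI[of _ C], rule conjI[OF C0], intro ballI impI)
    fix B1 B2 assume G1: "B1 \<in> GL2" and G2: "B2 \<in> GL2" and d1: "coc_dist B1 A < \<delta>" and d2: "coc_dist B2 A < \<delta>"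
    have d1': "coc_dist B1 A < min \<delta>0 (\<delta>s / (L2 + 1))" "coc_dist B1 A < \<delta>0" using d1 by (simp_all add: \<delta>_def)
    have d2': "coc_dist B2 A < min \<delta>0 (\<delta>s / (L2 + 1))" "coc_dist B2 A < \<delta>0" using d2 by (simp_all add: \<delta>_def)
    have cl1: "normalize_coc B1 \<in> SL2" "coc_dist (normalize_coc B1) (normalize_coc A) < \<delta>s"
      using close_norm[where B=B1 and \<delta>s=\<delta>s, OF \<delta>0 L2 GL lip2 d1'(1)] by auto
    have cl2: "normalize_coc B2 \<in> SL2" "coc_dist (normalize_coc B2) (normalize_coc A) < \<delta>s"
      using close_norm[where B=B2 and \<delta>s=\<delta>s, OF \<delta>0 L2 GL lip2 d2'(1)] by auto
    define d where "d = coc_dist B1 B2"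
    have d0: "d \<ge> 0" unfolding d_def by (rule cd_nonneg)
    have "d \<le> coc_dist B1 A + coc_dist B2 A" unfolding d_def by (rule cd_tri)
    hence "d < 2 * \<delta>" using d1 d2 by linarith
    hence "C * d \<le> C * (2 * \<delta>)" using C0 by (intro mult_left_mono) auto
    also have "C * (2 * \<delta>) \<le> C * (2 * (t0 / (2 * C)))" using C0 by (intro mult_left_mono) (auto simp: \<delta>_def)
    also have "\<dots> = t0" using C0 by simp
    finally have Cdt: "C * d \<le> t0" .
    have Cd0: "C * d \<ge> 0" using C0 d0 by simp
    have wlow: "c * (C * d) \<le> \<omega> (C * d)" by (rule low[OF Cd0 Cdt])
    have w0: "\<omega> (C * d) \<ge> 0" using wlow c Cd0 by (smt (verit) mult_nonneg_nonneg)
    have dn: "coc_dist (normalize_coc B1) (normalize_coc B2) \<le> L2 * d"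
      unfolding d_def by (rule lip2[OF d1'(2) d2'(2)])
    have "Cs * coc_dist (normalize_coc B1) (normalize_coc B2) \<le> Cs * (L2 * d)"
      using dn Cs by (intro mult_left_mono) auto
    also have "Cs * (L2 * d) \<le> C * d" using C1(2) d0 by (simp add: mult.assoc[symmetric] mult_right_mono)
    finally have arg: "Cs * coc_dist (normalize_coc B1) (normalize_coc B2) \<le> C * d" .
    have arg0: "Cs * coc_dist (normalize_coc B1) (normalize_coc B2) \<ge> 0" using Cs cd_nonneg[of "normalize_coc B1" "normalize_coc B2"] by simp
    have "\<omega> (Cs * coc_dist (normalize_coc B1) (normalize_coc B2)) \<le> \<omega> (C * d)"
      using mono arg arg0 Cd0 by (auto intro: mono_onD)
    hence part1: "\<bar>Lplus p (normalize_coc B1) - Lplus p (normalize_coc B2)\<bar> \<le> Cs * \<omega> (C * d)"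
      using Hy[OF cl1(1) cl2(1) cl1(2) cl2(2)] Cs by (smt (verit) mult_left_mono)
    have "\<bar>mB B1 - mB B2\<bar> \<le> L1 * d" unfolding d_def by (rule mB_lip[OF lip1[OF d1'(2) d2'(2)]])
    also have "L1 * d \<le> (c * C) * d"
    proof (rule mult_right_mono[OF _ d0])
      show "L1 \<le> c * C" using C1(3) c by (simp add: divide_le_eq mult.commute)
    qed
    also have "(c * C) * d \<le> \<omega> (C * d)" using wlow by (simp add: mult.assoc)
    finally have part2: "\<bar>mB B1 - mB B2\<bar> \<le> \<omega> (C * d)" .
    have "\<bar>Lplus p B1 - Lplus p B2\<bar> \<le> \<bar>Lplus p (normalize_coc B1) - Lplus p (normalize_coc B2)\<bar> + \<bar>mB B1 - mB B2\<bar>"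
      unfolding Lplus_split[OF G1] Lplus_split[OF G2] by linarith
    also have "\<dots> \<le> (Cs + 1) * \<omega> (C * d)" using part1 part2 by (simp add: algebra_simps)
    also have "\<dots> \<le> C * \<omega> (C * d)" using C1(1) w0 by (intro mult_right_mono) auto
    finally show "\<bar>Lplus p B1 - Lplus p B2\<bar> \<le> C * \<omega> (C * coc_dist B1 B2)" by (simp add: d_def)
  qed
qed

end

theorem proposition2p1:
  fixes p :: "'a::finite pmf" and A :: "'a \<Rightarrow> mat2" and \<omega> :: "real \<Rightarrow> real"
  assumes "set_pmf p = UNIV"
    and "A \<in> GL2"
  shows "(uniform_exp_LDT p SL2 (normalize_coc A) \<longrightarrow> uniform_exp_LDT p GL2 A)
       \<and> (uniform_subexp_LDT p SL2 (normalize_coc A) \<longrightarrow> uniform_subexp_LDT p GL2 A)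
       \<and> (admissible_modulus \<omega> \<longrightarrow> has_modulus_near (Lplus p) SL2 \<omega> (normalize_coc A)
            \<longrightarrow> has_modulus_near (Lplus p) GL2 \<omega> A)"
proof -
  interpret bern p .
  show ?thesis using part_exp[OF assms(2)] part_subexp[OF assms(2)] part_mod[OF assms(2)] by blast
qed


end
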